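(* Let $\mu_0,\mu_1\in\mathcal{P}_{2,c}(\mathbb{R})$ be in convex order, $\mu_0\le_{\mathsf{cx}}\mu_1$, and assume $\int|x|^q\,d\mu_1(x)<\infty$ for some $q>4$. Then ${\mathbb{D}}(\mu_0,\mu_1)<\infty$.
   Context: $\mathcal{P}_{2,c}(\mathbb{R})$ denotes the set of Borel probability measures $\mu$ on $\mathbb{R}$ with $\int|x|^2\,d\mu<\infty$ and $\int x\,d\mu(x)=0$. $\mu_0\le_{\mathsf{cx}}\mu_1$ means $\int\varphi\,d\mu_0\le\int\varphi\,d\mu_1$ for every convex $\varphi:\mathbb{R}\to\mathbb{R}$. The diffusive transport distance is $${\mathbb{D}}(\mu_0,\mu_1)^2=\inf\Big\{\int_0^1\int_{\mathbb{R}}\Big|\frac{d\omega_s}{d\mu_s}\Big|^2\,d\mu_s\,ds\Big\},$$ the infimum running over weakly continuous curves $(\mu_s)_{s\in[0,1]}$ in $\mathcal{P}_{2,c}(\mathbb{R})$ from $\mu_0$ to $\mu_1$ and measurable families $(\omega_s)$ of finite signed Radon measures (no sign condition) with $\partial_s\mu_s=\partial_{xx}\omega_s$ in the sense of distributions (inner integral $=+\infty$ if $\omega_s\not\ll\mu_s$). *)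

theory Defs
  imports "HOL-Probability.Probability"
begin

definition P2c :: "real measure \<Rightarrow> bool" where
  "P2c \<mu> \<longleftrightarrow> prob_space \<mu> \<and> sets \<mu> = sets borel \<and>
     (\<integral>\<^sup>+ x. ennreal (x\<^sup>2) \<partial>\<mu>) < \<infinity> \<and>
     integral\<^sup>L \<mu> (\<lambda>x. x) = 0"

text \<open>For convex phi (bounded below by an affine function) the
  integral against a measure with finite first moment is well defined in
  (-infinity, +infinity]; the inequality is trivial when the right-hand side is
  +infinity, and otherwise it forces the left-hand side to be finite.\<close>
definition cx_le :: "real measure \<Rightarrow> real measure \<Rightarrow> bool" where
  "cx_le \<mu>0 \<mu>1 \<longleftrightarrow> (\<forall>\<phi> :: real \<Rightarrow> real. convex_on UNIV \<phi> \<longrightarrow>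
      integrable \<mu>1 \<phi> \<longrightarrow> (integrable \<mu>0 \<phi> \<and> integral\<^sup>L \<mu>0 \<phi> \<le> integral\<^sup>L \<mu>1 \<phi>))"

text \<open>Partial derivative: True = in the time variable s, False = in space x.\<close>
definition pd :: "bool \<Rightarrow> (real \<Rightarrow> real \<Rightarrow> real) \<Rightarrow> (real \<Rightarrow> real \<Rightarrow> real)" where
  "pd b f = (if b then (\<lambda>s x. deriv (\<lambda>t. f t x) s) else (\<lambda>s x. deriv (\<lambda>y. f s y) x))"

definition iter_pd :: "bool list \<Rightarrow> (real \<Rightarrow> real \<Rightarrow> real) \<Rightarrow> (real \<Rightarrow> real \<Rightarrow> real)" where
  "iter_pd ds f = foldr pd ds f"

definition smooth2 :: "(real \<Rightarrow> real \<Rightarrow> real) \<Rightarrow> bool" where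
  "smooth2 f \<longleftrightarrow> (\<forall>ds. continuous_on UNIV (\<lambda>(s, x). iter_pd ds f s x) \<and>
      (\<forall>s x. (\<lambda>t. iter_pd ds f t x) differentiable (at s) \<and>
             (\<lambda>y. iter_pd ds f s y) differentiable (at x)))"

definition test_fun :: "(real \<Rightarrow> real \<Rightarrow> real) \<Rightarrow> bool" where
  "test_fun \<phi> \<longleftrightarrow> smooth2 \<phi> \<and>
     compact (closure {(s, x). \<phi> s x \<noteq> 0}) \<and>
     closure {(s, x). \<phi> s x \<noteq> 0} \<subseteq> {0<..<1} \<times> UNIV"

text \<open>A finite signed (Radon) measure on R is represented by a pair (P, N) of
  finite Borel measures, omega(A) = P(A) - N(A) (Jordan decomposition).\<close>
definition fin_borel :: "real measure \<Rightarrow> bool" where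
  "fin_borel P \<longleftrightarrow> finite_measure P \<and> sets P = sets borel"

definition sm_val :: "real measure \<times> real measure \<Rightarrow> real set \<Rightarrow> real" where
  "sm_val \<omega> A = measure (fst \<omega>) A - measure (snd \<omega>) A"

definition sm_int :: "real measure \<times> real measure \<Rightarrow> (real \<Rightarrow> real) \<Rightarrow> real" where
  "sm_int \<omega> f = integral\<^sup>L (fst \<omega>) f - integral\<^sup>L (snd \<omega>) f"

text \<open>int |d omega / d mu|^2 d mu, and +infinity if omega is not absolutely
  continuous w.r.t. mu (INF of the empty set is top).\<close>
definition action :: "real measure \<Rightarrow> real measure \<times> real measure \<Rightarrow> ennreal" where
  "action \<mu> \<omega> = (INF w \<in> {w. w \<in> borel_measurable borel \<and> integrable \<mu> w \<and>
        (\<forall>A \<in> sets borel. sm_val \<omega> A = (\<integral>x\<in>A. w x \<partial>\<mu>))}.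
        \<integral>\<^sup>+ x. ennreal ((w x)\<^sup>2) \<partial>\<mu>)"

definition admissible ::
  "real measure \<Rightarrow> real measure \<Rightarrow> (real \<Rightarrow> real measure) \<Rightarrow> (real \<Rightarrow> real measure \<times> real measure) \<Rightarrow> bool" where
  "admissible \<mu>0 \<mu>1 \<mu> \<omega> \<longleftrightarrow>
     (\<forall>s\<in>{0..1}. P2c (\<mu> s)) \<and> \<mu> 0 = \<mu>0 \<and> \<mu> 1 = \<mu>1 \<and>
     (\<forall>f :: real \<Rightarrow> real. continuous_on UNIV f \<longrightarrow> bounded (range f) \<longrightarrow>
         continuous_on {0..1} (\<lambda>s. integral\<^sup>L (\<mu> s) f)) \<and>
     (\<forall>s\<in>{0..1}. fin_borel (fst (\<omega> s)) \<and> fin_borel (snd (\<omega> s))) \<and>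
     (\<forall>A\<in>sets borel. (\<lambda>s. sm_val (\<omega> s) A) \<in> borel_measurable (restrict_space borel {0..1})) \<and>
     (\<forall>\<phi>. test_fun \<phi> \<longrightarrow>
         set_integrable lborel {0..1} (\<lambda>s. integral\<^sup>L (\<mu> s) (\<lambda>x. pd True \<phi> s x)) \<and>
         set_integrable lborel {0..1} (\<lambda>s. sm_int (\<omega> s) (\<lambda>x. pd False (pd False \<phi>) s x)) \<and>
         (\<integral>s\<in>{0..1}. integral\<^sup>L (\<mu> s) (\<lambda>x. pd True \<phi> s x) \<partial>lborel) +
         (\<integral>s\<in>{0..1}. sm_int (\<omega> s) (\<lambda>x. pd False (pd False \<phi>) s x) \<partial>lborel) = 0)"

definition diffusive_sq :: "real measure \<Rightarrow> real measure \<Rightarrow> ennreal" where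
  "diffusive_sq \<mu>0 \<mu>1 = (INF p \<in> {(\<mu>, \<omega>). admissible \<mu>0 \<mu>1 \<mu> \<omega>}.
      \<integral>\<^sup>+ s\<in>{0..1}. action (fst p s) (snd p s) \<partial>lborel)"

definition diffusive_dist :: "real measure \<Rightarrow> real measure \<Rightarrow> ennreal" where
  "diffusive_dist \<mu>0 \<mu>1 = (if diffusive_sq \<mu>0 \<mu>1 = \<infinity> then \<infinity>
      else ennreal (sqrt (enn2real (diffusive_sq \<mu>0 \<mu>1))))"

end

theory Submission
  imports Defs
begin


lemma deriv_local_zero:
  fixes f :: "real \<Rightarrow> real"
  assumes "open S" "y \<in> S" "\<And>z. z \<in> S \<Longrightarrow> f z = 0"
  shows "deriv f y = 0"
proof -
  have "((\<lambda>z. 0::real) has_field_derivative 0) (at y)" by simp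
  then have "(f has_field_derivative 0) (at y)"
    by (rule has_field_derivative_transform_within_open[OF _ assms(1,2)]) (use assms(3) in auto)
  then show ?thesis by (rule DERIV_imp_deriv)
qed

lemma bounded_on_strip:
  fixes f :: "real \<Rightarrow> real \<Rightarrow> real"
  assumes c: "continuous_on UNIV (\<lambda>(s, x). f s x)" and z: "\<And>s x. R < \<bar>x\<bar> \<Longrightarrow> f s x = 0"
  shows "\<exists>B>0. \<forall>s\<in>{0..1}. \<forall>x. \<bar>f s x\<bar> \<le> B"
proof -
  have "compact ((\<lambda>(s, x). f s x) ` ({0..1} \<times> {-R..R}))"
    by (rule compact_continuous_image[OF continuous_on_subset[OF c]]) (auto intro: compact_Times)
  then obtain B where B: "B > 0" "\<And>y. y \<in> (\<lambda>(s, x). f s x) ` ({0..1} \<times> {-R..R}) \<Longrightarrow> norm y \<le> B"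
    using compact_imp_bounded bounded_pos by metis
  show ?thesis
  proof (intro exI[of _ B] conjI ballI allI)
    fix s x assume s: "s \<in> {0..1::real}"
    show "\<bar>f s x\<bar> \<le> B"
    proof (cases "R < \<bar>x\<bar>")
      case True then show ?thesis using z B by simp
    next
      case False
      have "f s x \<in> (\<lambda>(s, x). f s x) ` ({0..1} \<times> {-R..R})"
        using False s by (intro image_eqI[of _ _ "(s, x)"]) auto
      then show ?thesis using B(2)[of "f s x"] by simp
    qed
  qed (fact B)
qed

lemma iter_pd_simps: "iter_pd [] f = f" "iter_pd (b # ds) f = pd b (iter_pd ds f)"
  by (simp_all add: iter_pd_def)

locale testf =
  fixes \<phi> :: "real \<Rightarrow> real \<Rightarrow> real"
  assumes tf: "test_fun \<phi>"
begin

definition "D1 = pd True \<phi>"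
definition "P1 = pd False \<phi>"
definition "D2 = pd False (pd False \<phi>)"

lemma sm: "smooth2 \<phi>" using tf by (simp add: test_fun_def)

lemma cont_phi: "continuous_on UNIV (\<lambda>(s, x). \<phi> s x)"
  using sm unfolding smooth2_def by (metis iter_pd_simps(1))
lemma cont_D1: "continuous_on UNIV (\<lambda>(s, x). D1 s x)"
  using sm unfolding smooth2_def D1_def by (metis iter_pd_simps)
lemma cont_P1: "continuous_on UNIV (\<lambda>(s, x). P1 s x)"
  using sm unfolding smooth2_def P1_def by (metis iter_pd_simps)
lemma cont_D2: "continuous_on UNIV (\<lambda>(s, x). D2 s x)"
  using sm unfolding smooth2_def D2_def by (metis iter_pd_simps)

lemma deriv_t: "((\<lambda>t. \<phi> t x) has_real_derivative D1 s x) (at s)"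
proof -
  have "(\<lambda>t. \<phi> t x) differentiable (at s)" using sm unfolding smooth2_def by (metis iter_pd_simps(1))
  then show ?thesis unfolding D1_def pd_def using DERIV_deriv_iff_real_differentiable by auto
qed

lemma deriv_x: "((\<lambda>y. \<phi> s y) has_real_derivative P1 s x) (at x)"
proof -
  have "(\<lambda>y. \<phi> s y) differentiable (at x)" using sm unfolding smooth2_def by (metis iter_pd_simps(1))
  then show ?thesis unfolding P1_def pd_def using DERIV_deriv_iff_real_differentiable by auto
qed

lemma deriv_xx: "((\<lambda>y. P1 s y) has_real_derivative D2 s x) (at x)"
proof -
  have "(\<lambda>y. P1 s y) differentiable (at x)" using sm unfolding smooth2_def P1_def by (metis iter_pd_simps)
  then show ?thesis unfolding P1_def D2_def pd_def[of False "pd False \<phi>"] using DERIV_deriv_iff_real_differentiable by auto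
qed

lemma supp: "closure {(s, x). \<phi> s x \<noteq> 0} \<subseteq> {0<..<1} \<times> UNIV" "compact (closure {(s, x). \<phi> s x \<noteq> 0})"
  using tf unfolding test_fun_def by blast+

lemma phi_zero_time: "s \<le> 0 \<or> 1 \<le> s \<Longrightarrow> \<phi> s x = 0"
proof (rule ccontr)
  assume "s \<le> 0 \<or> 1 \<le> s" "\<phi> s x \<noteq> 0"
  then have "(s, x) \<in> {(s, x). \<phi> s x \<noteq> 0}" by simp
  then have "(s, x) \<in> closure {(s, x). \<phi> s x \<noteq> 0}" by (rule subsetD[OF closure_subset])
  then have "(s, x) \<in> {0<..<1} \<times> (UNIV::real set)" using supp(1) by blast
  then show False using \<open>s \<le> 0 \<or> 1 \<le> s\<close> by simp
qed

lemma exR: "\<exists>R>0. \<forall>s x. R < \<bar>x\<bar> \<longrightarrow> \<phi> s x = 0"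
proof -
  obtain R where R: "R > 0" "\<And>z. z \<in> closure {(s, x). \<phi> s x \<noteq> 0} \<Longrightarrow> norm z \<le> R"
    using compact_imp_bounded[OF supp(2)] bounded_pos by metis
  show ?thesis
  proof (intro exI[of _ R] conjI allI impI)
    fix s x :: real assume "R < \<bar>x\<bar>"
    moreover have "\<bar>x\<bar> \<le> norm (s, x)" by (metis norm_snd_le real_norm_def snd_conv)
    ultimately have "R < norm (s, x)" by linarith
    then have "(s, x) \<notin> closure {(s, x). \<phi> s x \<noteq> 0}" using R(2) by (meson not_le)
    then have "(s, x) \<notin> {(s, x). \<phi> s x \<noteq> 0}" using closure_subset by (metis subsetD)
    then show "\<phi> s x = 0" by simp
  qed (fact R)
qed

definition "R = (SOME R. R > 0 \<and> (\<forall>s x. R < \<bar>x\<bar> \<longrightarrow> \<phi> s x = 0))"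

lemma R_pos: "R > 0" and phi_zero: "R < \<bar>x\<bar> \<Longrightarrow> \<phi> s x = 0"
  using someI_ex[OF exR] unfolding R_def by auto

lemma openR: "open {z::real. R < \<bar>z\<bar>}"
  by (intro open_Collect_less continuous_intros)

lemma D1_zero: "R < \<bar>x\<bar> \<Longrightarrow> D1 s x = 0"
  unfolding D1_def pd_def by (auto intro!: deriv_local_zero[of UNIV] simp: phi_zero)

lemma P1_zero: "R < \<bar>x\<bar> \<Longrightarrow> P1 s x = 0"
  unfolding P1_def pd_def by (auto intro!: deriv_local_zero[OF openR] simp: phi_zero)

lemma D2_zero: "R < \<bar>x\<bar> \<Longrightarrow> D2 s x = 0"
  unfolding D2_def pd_def[of False "pd False \<phi>"] using P1_zero unfolding P1_def
  by (auto intro!: deriv_local_zero[OF openR])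

definition "B = (SOME B. B > 0 \<and> (\<forall>s\<in>{0..1}. \<forall>x. \<bar>\<phi> s x\<bar> \<le> B \<and> \<bar>D1 s x\<bar> \<le> B \<and> \<bar>D2 s x\<bar> \<le> B))"

lemma exB: "\<exists>B. B > 0 \<and> (\<forall>s\<in>{0..1}. \<forall>x. \<bar>\<phi> s x\<bar> \<le> B \<and> \<bar>D1 s x\<bar> \<le> B \<and> \<bar>D2 s x\<bar> \<le> B)"
proof -
  obtain B1 where B1: "B1 > 0" "\<forall>s\<in>{0..1}. \<forall>x. \<bar>\<phi> s x\<bar> \<le> B1"
    using bounded_on_strip[OF cont_phi phi_zero] by blast
  obtain B2 where B2: "B2 > 0" "\<forall>s\<in>{0..1}. \<forall>x. \<bar>D1 s x\<bar> \<le> B2"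
    using bounded_on_strip[OF cont_D1 D1_zero] by blast
  obtain B3 where B3: "B3 > 0" "\<forall>s\<in>{0..1}. \<forall>x. \<bar>D2 s x\<bar> \<le> B3"
    using bounded_on_strip[OF cont_D2 D2_zero] by blast
  show ?thesis
  proof (rule exI[of _ "B1 + B2 + B3"], intro conjI ballI allI)
    fix s x assume s: "s \<in> {0..1::real}"
    have "\<bar>\<phi> s x\<bar> \<le> B1" using B1(2) s by blast
    then show "\<bar>\<phi> s x\<bar> \<le> B1 + B2 + B3" using B1(1) B2(1) B3(1) by linarith
    have "\<bar>D1 s x\<bar> \<le> B2" using B2(2) s by blast
    then show "\<bar>D1 s x\<bar> \<le> B1 + B2 + B3" using B1(1) B2(1) B3(1) by linarith
    have "\<bar>D2 s x\<bar> \<le> B3" using B3(2) s by blast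
    then show "\<bar>D2 s x\<bar> \<le> B1 + B2 + B3" using B1(1) B2(1) B3(1) by linarith
  qed (use B1 B2 B3 in auto)
qed

lemma B_pos: "B > 0" and B_bound: "s \<in> {0..1} \<Longrightarrow> \<bar>\<phi> s x\<bar> \<le> B"  "s \<in> {0..1} \<Longrightarrow> \<bar>D1 s x\<bar> \<le> B"
  "s \<in> {0..1} \<Longrightarrow> \<bar>D2 s x\<bar> \<le> B"
  using someI_ex[OF exB] unfolding B_def by auto

lemma meas_phi: "(\<lambda>(s, x). \<phi> s x) \<in> borel_measurable borel"
  by (rule borel_measurable_continuous_onI[OF cont_phi])
lemma meas_D1: "(\<lambda>(s, x). D1 s x) \<in> borel_measurable borel"
  by (rule borel_measurable_continuous_onI[OF cont_D1])
lemma meas_D2: "(\<lambda>(s, x). D2 s x) \<in> borel_measurable borel"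
  by (rule borel_measurable_continuous_onI[OF cont_D2])

end



lemma hasint_pos:
  fixes e :: real assumes e: "e > 1"
  shows "((\<lambda>x. (1 + x) powr (-e)) has_integral (1 / (e - 1))) {0..}"
proof (rule has_integral_to_inf)
  show "(\<lambda>x. (1 + x) powr (-e)) integrable_on {0..y}" for y
    by (intro integrable_continuous_interval continuous_intros) auto
  define F where "F = (\<lambda>x::real. (1 + x) powr (1 - e) / (1 - e))"
  have dF: "(F has_real_derivative (1 + x) powr (-e)) (at x)" if "x \<ge> 0" for x
  proof -
    have "((\<lambda>x. (1 + x) powr (1 - e)) has_real_derivative (1 - e) * (1 + x) powr (1 - e - 1) * 1) (at x)"
      by (rule DERIV_chain2[OF has_real_derivative_powr]) (use that in \<open>auto intro!: derivative_eq_intros\<close>)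
    then have "(F has_real_derivative (1 - e) * (1 + x) powr (1 - e - 1) * 1 / (1 - e)) (at x)"
      unfolding F_def by (rule DERIV_cdivide)
    then show ?thesis using e by simp
  qed
  have "((\<lambda>x. (1 + x) powr (-e)) has_integral (F y - F 0)) {0..y}" if "y \<ge> 0" for y
    using that
    by (intro fundamental_theorem_of_calculus)
       (auto intro!: has_field_derivative_at_within dF
               simp flip: has_real_derivative_iff_has_vector_derivative)
  then have ev: "\<forall>\<^sub>F y in at_top. integral {0..y} (\<lambda>x. (1 + x) powr (-e)) = F y - F 0"
    by (meson eventually_at_top_linorderI integral_unique)
  have "((\<lambda>y::real. (1 + y) powr (1 - e)) \<longlongrightarrow> 0) at_top"
    using e by (intro tendsto_neg_powr filterlim_tendsto_add_at_top[OF tendsto_const filterlim_ident]) auto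
  then have "((\<lambda>y::real. F y - F 0) \<longlongrightarrow> 0 / (1 - e) - F 0) at_top"
    unfolding F_def using e by (intro tendsto_diff tendsto_divide tendsto_const) auto
  moreover have "0 / (1 - e) - F 0 = 1 / (e - 1)" using e by (simp add: F_def field_simps)
  ultimately show "((\<lambda>y. integral {0..y} (\<lambda>x. (1 + x) powr (-e))) \<longlongrightarrow> 1 / (e - 1)) at_top"
    using ev by (simp add: filterlim_cong)
qed simp

lemma nn_pow_half:
  fixes e :: real assumes e: "e > 1"
  shows "(\<integral>\<^sup>+x. ennreal ((1 + \<bar>x\<bar>) powr (-e)) * indicator {0..} x \<partial>lborel) = ennreal (1 / (e - 1))"
proof -
  have "(\<integral>\<^sup>+x. ennreal ((1 + \<bar>x\<bar>) powr (-e)) * indicator {0..} x \<partial>lborel)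
      = (\<integral>\<^sup>+x. ennreal ((1 + x) powr (-e)) * indicator {0..} x \<partial>lborel)"
    by (intro nn_integral_cong) (auto split: split_indicator)
  also have "\<dots> = ennreal (1 / (e - 1))"
    by (rule nn_integral_has_integral_lebesgue'[OF _ hasint_pos[OF e]]) simp
  finally show ?thesis .
qed

lemma nn_reflect:
  fixes g :: "real \<Rightarrow> ennreal" assumes [measurable]: "g \<in> borel_measurable borel"
  shows "(\<integral>\<^sup>+x. g x \<partial>lborel) = (\<integral>\<^sup>+x. g (- x) \<partial>lborel)"
proof -
  have "(\<integral>\<^sup>+x. g x \<partial>lborel) = (\<integral>\<^sup>+x. g x \<partial>distr lborel borel uminus)"
    by (simp add: lborel_distr_uminus)
  also have "\<dots> = (\<integral>\<^sup>+x. g (- x) \<partial>lborel)"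
    by (rule nn_integral_distr) auto
  finally show ?thesis .
qed

lemma nn_pow_finite:
  fixes e :: real assumes e: "e > 1"
  shows "(\<integral>\<^sup>+x. ennreal ((1 + \<bar>x\<bar>) powr (-e)) \<partial>lborel) < \<infinity>"
proof -
  let ?f = "\<lambda>x::real. ennreal ((1 + \<bar>x\<bar>) powr (-e))"
  have "(\<integral>\<^sup>+x. ?f x \<partial>lborel) \<le> (\<integral>\<^sup>+x. ?f x * indicator {0..} x + ?f x * indicator {0..} (- x) \<partial>lborel)"
    by (intro nn_integral_mono) (auto split: split_indicator)
  also have "\<dots> = (\<integral>\<^sup>+x. ?f x * indicator {0..} x \<partial>lborel) + (\<integral>\<^sup>+x. ?f x * indicator {0..} (- x) \<partial>lborel)"
    by (intro nn_integral_add) auto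
  also have "(\<integral>\<^sup>+x. ?f x * indicator {0..} (- x) \<partial>lborel) = (\<integral>\<^sup>+x. ?f (- x) * indicator {0..} (- (- x)) \<partial>lborel)"
    by (rule nn_reflect) auto
  also have "\<dots> = (\<integral>\<^sup>+x. ?f x * indicator {0..} x \<partial>lborel)" by simp
  finally have "(\<integral>\<^sup>+x. ?f x \<partial>lborel) \<le> ennreal (1 / (e - 1)) + ennreal (1 / (e - 1))"
    using nn_pow_half[OF e] by simp
  also have "\<dots> < \<infinity>" by simp
  finally show ?thesis .
qed

lemma integrable_pow:
  fixes e :: real assumes e: "e > 1"
  shows "integrable lborel (\<lambda>x. (1 + \<bar>x\<bar>) powr (-e))"
  by (rule integrableI_bounded) (use nn_pow_finite[OF e] in auto)

lemma integrable_pow_bound: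
  fixes e :: real and f :: "real \<Rightarrow> real"
  assumes e: "e > 1" and [measurable]: "f \<in> borel_measurable borel"
    and b: "\<And>x. \<bar>f x\<bar> \<le> K * (1 + \<bar>x\<bar>) powr (-e)"
  shows "integrable lborel f"
proof -
  have i: "integrable lborel (\<lambda>x. K * (1 + \<bar>x\<bar>) powr (-e))"
    using integrable_pow[OF e] by simp
  moreover have ae: "AE x in lborel. norm (f x) \<le> norm (K * (1 + \<bar>x\<bar>) powr (-e))"
    using b by (auto intro: order_trans[OF _ abs_ge_self])
  show ?thesis using Bochner_Integration.integrable_bound[OF i _ ae] by simp
qed



definition hpow :: "real \<Rightarrow> real \<Rightarrow> real" where "hpow p x = (1 + \<bar>x\<bar>) powr (-p)"
definition Zc :: "real \<Rightarrow> real" where "Zc p = (\<integral>x. hpow p x \<partial>lborel)"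
definition eta_d :: "real \<Rightarrow> real \<Rightarrow> real" where "eta_d p x = hpow p x / Zc p"
definition eta :: "real \<Rightarrow> real measure" where "eta p = density lborel (\<lambda>x. ennreal (eta_d p x))"

lemma hpow_pos: "hpow p x > 0" by (simp add: hpow_def)
lemma hpow_meas[measurable]: "hpow p \<in> borel_measurable borel" unfolding hpow_def by measurable
lemma eta_d_meas[measurable]: "eta_d p \<in> borel_measurable borel" unfolding eta_d_def by measurable

lemma Zc_pos: assumes "p > 1" shows "Zc p > 0"
proof -
  have i: "integrable lborel (hpow p)" unfolding hpow_def using integrable_pow[OF assms] .
  have "Zc p \<ge> 0" unfolding Zc_def by (intro integral_nonneg_AE) (auto intro: less_imp_le hpow_pos)
  moreover have "Zc p \<noteq> 0"
  proof
    assume "Zc p = 0"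
    then have "AE x in lborel. hpow p x = 0" unfolding Zc_def
      using integral_nonneg_eq_0_iff_AE[OF i] by (auto intro: less_imp_le hpow_pos)
    then have "AE x in (lborel::real measure). False" using hpow_pos[of p] by (simp add: less_le)
    then have "ae_filter (lborel::real measure) = bot" by (simp add: trivial_limit_def)
    then show False by (simp add: ae_filter_eq_bot_iff)
  qed
  ultimately show ?thesis by simp
qed

lemma eta_d_pos: "p > 1 \<Longrightarrow> eta_d p x > 0"
  using Zc_pos hpow_pos by (simp add: eta_d_def)

lemma eta_sets[simp]: "sets (eta p) = sets borel" "space (eta p) = UNIV"
  by (simp_all add: eta_def)

lemma eta_prob: assumes "p > 1" shows "prob_space (eta p)"
proof
  have i: "integrable lborel (hpow p)" unfolding hpow_def using integrable_pow[OF assms] .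
  have "emeasure (eta p) (space (eta p)) = (\<integral>\<^sup>+x. ennreal (eta_d p x) \<partial>lborel)"
    by (simp add: eta_def emeasure_density)
  also have "\<dots> = ennreal (\<integral>x. eta_d p x \<partial>lborel)"
    by (rule nn_integral_eq_integral) (use i eta_d_pos[OF assms] in \<open>auto simp: eta_d_def intro: less_imp_le\<close>)
  also have "(\<integral>x. eta_d p x \<partial>lborel) = 1"
    using Zc_pos[OF assms] by (simp add: eta_d_def Zc_def)
  finally show "emeasure (eta p) (space (eta p)) = 1" by simp
qed

lemma eta_integrable_pow:
  assumes "r < p - 1" "p > 1"
  shows "integrable (eta p) (\<lambda>x. (1 + \<bar>x\<bar>) powr r)"
proof -
  have p: "p > 1" using assms by simp
  have "integrable lborel (\<lambda>x. eta_d p x * (1 + \<bar>x\<bar>) powr r)"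
  proof (rule integrable_pow_bound[of "p - r"])
    show "p - r > 1" using assms by simp
    show "(\<lambda>x. eta_d p x * (1 + \<bar>x\<bar>) powr r) \<in> borel_measurable borel" by measurable
    fix x
    have "\<bar>eta_d p x * (1 + \<bar>x\<bar>) powr r\<bar> = (1 + \<bar>x\<bar>) powr (-p) * (1 + \<bar>x\<bar>) powr r / Zc p"
      using Zc_pos[OF p] by (simp add: eta_d_def hpow_def)
    also have "\<dots> = (1 / Zc p) * (1 + \<bar>x\<bar>) powr (- (p - r))"
      by (simp add: powr_add[symmetric])
    finally show "\<bar>eta_d p x * (1 + \<bar>x\<bar>) powr r\<bar> \<le> (1 / Zc p) * (1 + \<bar>x\<bar>) powr (- (p - r))" by simp
  qed
  then show ?thesis unfolding eta_def
    by (subst integrable_density) (use eta_d_pos[OF p] in \<open>auto intro: less_imp_le\<close>)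
qed

lemma sq_le_pow2: "x\<^sup>2 \<le> (1 + \<bar>x::real\<bar>) powr 2"
proof -
  have "(1 + \<bar>x\<bar>) powr 2 = (1 + \<bar>x\<bar>)\<^sup>2" by (simp add: powr_numeral)
  moreover have "\<bar>x\<bar>\<^sup>2 \<le> (1 + \<bar>x\<bar>)\<^sup>2" by (rule power_mono) auto
  then have "x\<^sup>2 \<le> (1 + \<bar>x\<bar>)\<^sup>2" by simp
  ultimately show ?thesis by simp
qed

lemma abs_le_pow2: "\<bar>x\<bar> \<le> (1 + \<bar>x::real\<bar>) powr 2"
proof -
  have "(1 + \<bar>x\<bar>) powr 2 = (1 + \<bar>x\<bar>) * (1 + \<bar>x\<bar>)" by (simp add: powr_numeral power2_eq_square)
  moreover have "\<bar>x\<bar> \<le> (1 + \<bar>x\<bar>) * (1 + \<bar>x\<bar>)"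
  proof -
    have "0 \<le> \<bar>x\<bar> * \<bar>x\<bar>" by simp
    then show ?thesis by (simp add: algebra_simps)
  qed
  ultimately show ?thesis by simp
qed

lemma bound_by_integrable:
  fixes f g :: "real \<Rightarrow> real"
  assumes "integrable M g" "f \<in> borel_measurable M" "\<And>x. \<bar>f x\<bar> \<le> g x"
  shows "integrable M f"
proof -
  have ae: "AE x in M. norm (f x) \<le> norm (g x)" using assms(3) by (auto intro: order_trans[OF _ abs_ge_self])
  show ?thesis using Bochner_Integration.integrable_bound[OF assms(1) assms(2) ae] .
qed

lemma eta_meas: "borel_measurable (eta p) = borel_measurable borel"
  by (rule measurable_cong_sets) simp_all

lemma eta_integrable_x: assumes "p > 3" shows "integrable (eta p) (\<lambda>x. x)"
  by (rule bound_by_integrable[OF eta_integrable_pow[of 2 p]]) (use assms abs_le_pow2 in \<open>auto simp: eta_meas\<close>)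

lemma eta_integrable_sq: assumes "p > 3" shows "integrable (eta p) (\<lambda>x. x\<^sup>2)"
  by (rule bound_by_integrable[OF eta_integrable_pow[of 2 p]]) (use assms sq_le_pow2 in \<open>auto simp: eta_meas\<close>)

lemma eta_d_sym: "eta_d p (- x) = eta_d p x" by (simp add: eta_d_def hpow_def)

lemma eta_mean: assumes "p > 3" shows "(\<integral>x. x \<partial>eta p) = 0"
proof -
  have p: "p > 1" using assms by simp
  have "(\<integral>x. x \<partial>eta p) = (\<integral>x. eta_d p x * x \<partial>lborel)"
    unfolding eta_def by (subst integral_density) (use eta_d_pos[OF p] in \<open>auto intro: less_imp_le\<close>)
  moreover have "(\<integral>x. eta_d p x * x \<partial>lborel) = - (\<integral>x. eta_d p x * x \<partial>lborel)"
  proof -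
    have "(\<integral>x. eta_d p x * x \<partial>lborel) = \<bar>-1\<bar> *\<^sub>R (\<integral>x. eta_d p (0 + -1 * x) * (0 + -1 * x) \<partial>lborel)"
      by (rule lborel_integral_real_affine) simp
    also have "\<dots> = (\<integral>x. - (eta_d p x * x) \<partial>lborel)" by (simp add: eta_d_sym)
    finally show ?thesis by simp
  qed
  ultimately show ?thesis by simp
qed

lemma P2c_eta: assumes "p > 3" shows "P2c (eta p)"
proof -
  have p: "p > 1" using assms by simp
  have "(\<integral>\<^sup>+x. ennreal (norm (x\<^sup>2)) \<partial>eta p) < \<infinity>"
    using eta_integrable_sq[OF assms] by (simp add: integrable_iff_bounded)
  then have "(\<integral>\<^sup>+x. ennreal (x\<^sup>2) \<partial>eta p) < \<infinity>" by simp
  then show ?thesis unfolding P2c_def using eta_prob[OF p] eta_mean[OF assms] by simp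
qed



lemma P2c_sets: "P2c \<nu> \<Longrightarrow> sets \<nu> = sets borel" by (simp add: P2c_def)
lemma P2c_prob: "P2c \<nu> \<Longrightarrow> prob_space \<nu>" by (simp add: P2c_def)
lemma P2c_space: "P2c \<nu> \<Longrightarrow> space \<nu> = UNIV"
  using sets_eq_imp_space_eq[OF P2c_sets] by simp
lemma P2c_meas: "P2c \<nu> \<Longrightarrow> borel_measurable \<nu> = borel_measurable borel"
  by (rule measurable_cong_sets) (simp_all add: P2c_def)
lemma P2c_measI: "P2c \<nu> \<Longrightarrow> f \<in> borel_measurable borel \<Longrightarrow> f \<in> borel_measurable \<nu>"
  using P2c_meas by blast
lemma P2c_sf: "P2c \<nu> \<Longrightarrow> sigma_finite_measure \<nu>"
  using P2c_prob prob_space_imp_sigma_finite by blast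
lemma P2c_fin: "P2c \<nu> \<Longrightarrow> finite_measure \<nu>"
  using P2c_prob prob_space.axioms(1) by blast
lemma P2c_mean: "P2c \<nu> \<Longrightarrow> (\<integral>x. x \<partial>\<nu>) = 0" by (simp add: P2c_def)

lemma P2c_int_sq: assumes "P2c \<nu>" shows "integrable \<nu> (\<lambda>x. x\<^sup>2)"
proof (rule integrableI_bounded)
  show "(\<lambda>x. x\<^sup>2) \<in> borel_measurable \<nu>" by (rule P2c_measI[OF assms]) measurable
  have "(\<integral>\<^sup>+x. ennreal (x\<^sup>2) \<partial>\<nu>) < \<infinity>" using assms by (simp add: P2c_def)
  then show "(\<integral>\<^sup>+x. ennreal (norm (x\<^sup>2)) \<partial>\<nu>) < \<infinity>" by simp
qed

lemma abs_le_1_sq: "\<bar>x::real\<bar> \<le> 1 + x\<^sup>2"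
proof -
  have "0 \<le> (\<bar>x\<bar> - 1)\<^sup>2" by simp
  then have "2 * \<bar>x\<bar> \<le> 1 + \<bar>x\<bar>\<^sup>2" by (simp add: power2_eq_square algebra_simps)
  then show ?thesis by simp
qed

lemma P2c_int_x: assumes "P2c \<nu>" shows "integrable \<nu> (\<lambda>x. x)"
proof -
  interpret prob_space \<nu> using P2c_prob[OF assms] .
  have i: "integrable \<nu> (\<lambda>x. 1 + x\<^sup>2)" using P2c_int_sq[OF assms] by simp
  show ?thesis by (rule bound_by_integrable[OF i]) (auto intro: P2c_measI[OF assms] abs_le_1_sq)
qed

lemma P2c_int_abs_plus: assumes "P2c \<nu>" shows "integrable \<nu> (\<lambda>y. \<bar>y\<bar> + c)"
proof -
  interpret prob_space \<nu> using P2c_prob[OF assms] .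
  show ?thesis using P2c_int_x[OF assms] by simp
qed

lemma meas_pair:
  fixes f :: "real \<times> real \<Rightarrow> real" and N \<nu> :: "real measure"
  assumes "sets N = sets borel" "sets \<nu> = sets borel" "f \<in> borel_measurable borel"
  shows "f \<in> borel_measurable (N \<Otimes>\<^sub>M \<nu>)"
proof -
  have "sets (N \<Otimes>\<^sub>M \<nu>) = sets ((borel::real measure) \<Otimes>\<^sub>M (borel::real measure))" by (rule sets_pair_measure_cong) (fact assms)+
  also have "\<dots> = sets (borel :: (real \<times> real) measure)" unfolding borel_prod ..
  finally have "borel_measurable (N \<Otimes>\<^sub>M \<nu>) = (borel_measurable borel :: (real \<times> real \<Rightarrow> real) set)"
    by (rule measurable_cong_sets) simp
  then show ?thesis using assms(3) by simp
qed

definition callf :: "real measure \<Rightarrow> real \<Rightarrow> real" where "callf \<nu> x = (\<integral>y. max 0 (y - x) \<partial>\<nu>)"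
definition putf :: "real measure \<Rightarrow> real \<Rightarrow> real" where "putf \<nu> x = (\<integral>y. max 0 (x - y) \<partial>\<nu>)"

lemma int_call: assumes "P2c \<nu>" shows "integrable \<nu> (\<lambda>y. max 0 (y - x))"
  by (rule bound_by_integrable[OF P2c_int_abs_plus[OF assms, of "\<bar>x\<bar>"]]) (auto intro!: P2c_measI[OF assms])
lemma int_put: assumes "P2c \<nu>" shows "integrable \<nu> (\<lambda>y. max 0 (x - y))"
  by (rule bound_by_integrable[OF P2c_int_abs_plus[OF assms, of "\<bar>x\<bar>"]]) (auto intro!: P2c_measI[OF assms])

lemma call_nonneg: "callf \<nu> x \<ge> 0" unfolding callf_def by (rule integral_nonneg_AE) simp
lemma put_nonneg: "putf \<nu> x \<ge> 0" unfolding putf_def by (rule integral_nonneg_AE) simp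

lemma call_put: assumes "P2c \<nu>" shows "callf \<nu> x = putf \<nu> x - x"
proof -
  interpret prob_space \<nu> using P2c_prob[OF assms] .
  have "callf \<nu> x = (\<integral>y. (y - x) + max 0 (x - y) \<partial>\<nu>)"
    unfolding callf_def by (rule Bochner_Integration.integral_cong) auto
  also have "\<dots> = (\<integral>y. y - x \<partial>\<nu>) + putf \<nu> x"
    unfolding putf_def using P2c_int_x[OF assms] int_put[OF assms] by (subst Bochner_Integration.integral_add) auto
  also have "(\<integral>y. y - x \<partial>\<nu>) = - x"
    using P2c_int_x[OF assms] P2c_mean[OF assms] by (subst Bochner_Integration.integral_diff) (auto simp: prob_space)
  finally show ?thesis by simp
qed

lemma callf_meas: assumes "P2c \<nu>" shows "callf \<nu> \<in> borel_measurable borel"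
proof -
  have "(\<lambda>(x, y). max 0 (y - x)) \<in> borel_measurable (borel \<Otimes>\<^sub>M \<nu>)"
    by (rule meas_pair) (use P2c_sets[OF assms] in \<open>auto simp flip: borel_prod\<close>)
  then show ?thesis unfolding callf_def
    using sigma_finite_measure.borel_measurable_lebesgue_integral[OF P2c_sf[OF assms], of "\<lambda>x y. max 0 (y - x)" borel]
    by simp
qed

lemma convex_call: "convex_on UNIV (\<lambda>y::real. max 0 (y - x))"
proof (rule convex_onI)
  fix t a b :: real assume t: "t > 0" "t < 1"
  have 1: "(1 - t) * (a - x) \<le> (1 - t) * max 0 (a - x)" using t by (intro mult_left_mono) auto
  have 2: "t * (b - x) \<le> t * max 0 (b - x)" using t by (intro mult_left_mono) auto
  have 3: "0 \<le> (1 - t) * max 0 (a - x) + t * max 0 (b - x)" using t by simp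
  have "(1 - t) *\<^sub>R a + t *\<^sub>R b - x = (1 - t) * (a - x) + t * (b - x)" by (simp add: algebra_simps)
  then show "max 0 ((1 - t) *\<^sub>R a + t *\<^sub>R b - x) \<le> (1 - t) * max 0 (a - x) + t * max 0 (b - x)"
    using 1 2 3 by linarith
qed simp

lemma convex_put: "convex_on UNIV (\<lambda>y::real. max 0 (x - y))"
proof (rule convex_onI)
  fix t a b :: real assume t: "t > 0" "t < 1"
  have 1: "(1 - t) * (x - a) \<le> (1 - t) * max 0 (x - a)" using t by (intro mult_left_mono) auto
  have 2: "t * (x - b) \<le> t * max 0 (x - b)" using t by (intro mult_left_mono) auto
  have 3: "0 \<le> (1 - t) * max 0 (x - a) + t * max 0 (x - b)" using t by simp
  have "x - ((1 - t) *\<^sub>R a + t *\<^sub>R b) = (1 - t) * (x - a) + t * (x - b)" by (simp add: algebra_simps)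
  then show "max 0 (x - ((1 - t) *\<^sub>R a + t *\<^sub>R b)) \<le> (1 - t) * max 0 (x - a) + t * max 0 (x - b)"
    using 1 2 3 by linarith
qed simp

lemma cx_call: assumes "cx_le \<mu>0 \<mu>1" "P2c \<mu>1" shows "callf \<mu>0 x \<le> callf \<mu>1 x"
  using assms(1) convex_call int_call[OF assms(2)] unfolding cx_le_def callf_def by blast
lemma cx_put: assumes "cx_le \<mu>0 \<mu>1" "P2c \<mu>1" shows "putf \<mu>0 x \<le> putf \<mu>1 x"
  using assms(1) convex_put int_put[OF assms(2)] unfolding cx_le_def putf_def by blast
lemma cx_refl: "cx_le \<mu> \<mu>" by (simp add: cx_le_def)

lemma pw_decay:
  fixes x y q :: real assumes q: "q \<ge> 1" and x: "x \<ge> 0"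
  shows "max 0 (y - x) \<le> (1 + \<bar>x\<bar>) powr (1 - q) * (1 + \<bar>y\<bar>) powr q"
proof (cases "y \<le> x")
  case True then show ?thesis by simp
next
  case False
  then have y: "y > x" by simp
  have "(1 + \<bar>y\<bar>) powr (1 - q) \<le> (1 + \<bar>x\<bar>) powr (1 - q)"
    using q x y by (intro powr_mono2') auto
  then have "(1 + \<bar>y\<bar>) powr (1 - q) * (1 + \<bar>y\<bar>) powr q \<le> (1 + \<bar>x\<bar>) powr (1 - q) * (1 + \<bar>y\<bar>) powr q"
    by (intro mult_right_mono) auto
  moreover have "(1 + \<bar>y\<bar>) powr (1 - q) * (1 + \<bar>y\<bar>) powr q = 1 + \<bar>y\<bar>"
    by (simp add: powr_add[symmetric])
  moreover have "max 0 (y - x) \<le> 1 + \<bar>y\<bar>" using x y by simp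
  ultimately show ?thesis by linarith
qed

lemma call_decay:
  assumes "P2c \<nu>" "integrable \<nu> (\<lambda>y. (1 + \<bar>y\<bar>) powr q)" "q \<ge> 1" "x \<ge> 0"
  shows "callf \<nu> x \<le> (1 + \<bar>x\<bar>) powr (1 - q) * (\<integral>y. (1 + \<bar>y\<bar>) powr q \<partial>\<nu>)"
proof -
  have "callf \<nu> x \<le> (\<integral>y. (1 + \<bar>x\<bar>) powr (1 - q) * (1 + \<bar>y\<bar>) powr q \<partial>\<nu>)"
    unfolding callf_def
    by (intro integral_mono int_call assms(1) pw_decay assms(3,4)) (use assms(2) in auto)
  then show ?thesis by simp
qed

lemma put_decay:
  assumes "P2c \<nu>" "integrable \<nu> (\<lambda>y. (1 + \<bar>y\<bar>) powr q)" "q \<ge> 1" "x \<le> 0"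
  shows "putf \<nu> x \<le> (1 + \<bar>x\<bar>) powr (1 - q) * (\<integral>y. (1 + \<bar>y\<bar>) powr q \<partial>\<nu>)"
proof -
  have pw: "max 0 (x - y) \<le> (1 + \<bar>x\<bar>) powr (1 - q) * (1 + \<bar>y\<bar>) powr q" for y
    using pw_decay[OF assms(3), of "- x" "- y"] assms(4) by simp
  have "putf \<nu> x \<le> (\<integral>y. (1 + \<bar>x\<bar>) powr (1 - q) * (1 + \<bar>y\<bar>) powr q \<partial>\<nu>)"
    unfolding putf_def
    by (intro integral_mono int_put assms(1) pw) (use assms(2) in auto)
  then show ?thesis by simp
qed

lemma G_decay:
  assumes nu: "P2c \<nu>" "cx_le \<nu> \<mu>1" and mu1: "P2c \<mu>1" "integrable \<mu>1 (\<lambda>y. (1 + \<bar>y\<bar>) powr q)"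
    and et: "P2c \<eta>" "integrable \<eta> (\<lambda>y. (1 + \<bar>y\<bar>) powr q)" and q: "q \<ge> 1"
  shows "\<bar>callf \<nu> x - callf \<eta> x\<bar> \<le>
    ((\<integral>y. (1 + \<bar>y\<bar>) powr q \<partial>\<mu>1) + (\<integral>y. (1 + \<bar>y\<bar>) powr q \<partial>\<eta>)) * (1 + \<bar>x\<bar>) powr (1 - q)"
proof (cases "x \<ge> 0")
  case True
  have a: "callf \<nu> x \<le> (1 + \<bar>x\<bar>) powr (1 - q) * (\<integral>y. (1 + \<bar>y\<bar>) powr q \<partial>\<mu>1)"
    using cx_call[OF nu(2) mu1(1), of x] call_decay[OF mu1 q True] by linarith
  have b: "callf \<eta> x \<le> (1 + \<bar>x\<bar>) powr (1 - q) * (\<integral>y. (1 + \<bar>y\<bar>) powr q \<partial>\<eta>)"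
    using call_decay[OF et q True] .
  show ?thesis using a b call_nonneg[of \<nu> x] call_nonneg[of \<eta> x] by (simp add: algebra_simps abs_le_iff)
next
  case False
  then have x: "x \<le> 0" by simp
  have e: "callf \<nu> x - callf \<eta> x = putf \<nu> x - putf \<eta> x" using call_put[OF nu(1)] call_put[OF et(1)] by simp
  have a: "putf \<nu> x \<le> (1 + \<bar>x\<bar>) powr (1 - q) * (\<integral>y. (1 + \<bar>y\<bar>) powr q \<partial>\<mu>1)"
    using cx_put[OF nu(2) mu1(1), of x] put_decay[OF mu1 q x] by linarith
  have b: "putf \<eta> x \<le> (1 + \<bar>x\<bar>) powr (1 - q) * (\<integral>y. (1 + \<bar>y\<bar>) powr q \<partial>\<eta>)"
    using put_decay[OF et q x] .
  show ?thesis unfolding e using a b put_nonneg[of \<nu> x] put_nonneg[of \<eta> x] by (simp add: algebra_simps abs_le_iff)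
qed



lemma cont_slice: "continuous_on UNIV (\<lambda>(s, x). f s x) \<Longrightarrow> continuous_on UNIV (\<lambda>x::real. (f :: real \<Rightarrow> real \<Rightarrow> real) s x)"
  by (rule continuous_on_compose2[of UNIV "\<lambda>(s, x). f s x" UNIV "\<lambda>x. (s, x)", simplified])
     (auto intro!: continuous_intros)

lemma cont_slice_t: "continuous_on UNIV (\<lambda>(s, x). f s x) \<Longrightarrow> continuous_on UNIV (\<lambda>s::real. (f :: real \<Rightarrow> real \<Rightarrow> real) s x)"
  by (rule continuous_on_compose2[of UNIV "\<lambda>(s, x). f s x" UNIV "\<lambda>s. (s, x)", simplified])
     (auto intro!: continuous_intros)

lemma pair_sf_lborel: "sigma_finite_measure \<nu> \<Longrightarrow> pair_sigma_finite lborel \<nu>"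
  by (simp add: pair_sigma_finite_def lborel.sigma_finite_measure_axioms)

context testf
begin

lemma inner_ftc:
  fixes s y :: real
  shows "(\<integral>x. D2 s x * max 0 (y - x) \<partial>lborel) = \<phi> s y"
proof -
  define L where "L = - R - \<bar>y\<bar> - 1"
  have L: "L \<le> y" "R < \<bar>L\<bar>" using R_pos by (auto simp: L_def)
  define F where "F = (\<lambda>x. P1 s x * (y - x) + \<phi> s x)"
  have dF: "(F has_real_derivative D2 s x * (y - x)) (at x)" for x
  proof -
    have "(F has_real_derivative (D2 s x * (y - x) + (0 - 1) * P1 s x) + P1 s x) (at x)"
      unfolding F_def by (intro DERIV_add DERIV_mult deriv_xx deriv_x DERIV_diff DERIV_const DERIV_ident)
    then show ?thesis by simp
  qed
  have c: "continuous_on {L..y} (\<lambda>x. D2 s x * (y - x))"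
    by (intro continuous_intros continuous_on_subset[OF cont_slice[OF cont_D2]]) auto
  have "(LBINT x. indicat_real {L..y} x *\<^sub>R (D2 s x * (y - x))) = F y - F L"
    by (rule integral_FTC_atLeastAtMost[OF L(1) _ c])
       (auto intro!: has_field_derivative_at_within dF simp flip: has_real_derivative_iff_has_vector_derivative)
  also have "F y - F L = \<phi> s y" using L P1_zero phi_zero by (simp add: F_def)
  also have "(LBINT x. indicat_real {L..y} x *\<^sub>R (D2 s x * (y - x))) = (\<integral>x. D2 s x * max 0 (y - x) \<partial>lborel)"
  proof (rule Bochner_Integration.integral_cong[OF refl])
    fix x
    show "indicat_real {L..y} x *\<^sub>R (D2 s x * (y - x)) = D2 s x * max 0 (y - x)"
    proof (cases "x < L")
      case True
      then have "R < \<bar>x\<bar>" using L R_pos by (auto simp: L_def)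
      then show ?thesis using D2_zero True by simp
    qed (auto simp: indicator_def)
  qed
  finally show ?thesis by simp
qed

lemma D2_slice_meas[measurable]: "D2 s \<in> borel_measurable borel"
  by (rule borel_measurable_continuous_onI[OF cont_slice[OF cont_D2]])

lemma callf_le: assumes "P2c \<nu>" shows "callf \<nu> x \<le> (\<integral>y. \<bar>y\<bar> \<partial>\<nu>) + \<bar>x\<bar>"
proof -
  interpret prob_space \<nu> using P2c_prob[OF assms] .
  have "callf \<nu> x \<le> (\<integral>y. \<bar>y\<bar> + \<bar>x\<bar> \<partial>\<nu>)"
    unfolding callf_def by (intro integral_mono int_call assms P2c_int_abs_plus) auto
  also have "\<dots> = (\<integral>y. \<bar>y\<bar> \<partial>\<nu>) + \<bar>x\<bar>"
    using P2c_int_x[OF assms] by (subst Bochner_Integration.integral_add) (auto simp: prob_space)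
  finally show ?thesis .
qed

lemma D2_call_bound:
  assumes "P2c \<nu>" "s \<in> {0..1}"
  shows "\<bar>D2 s x * callf \<nu> x\<bar> \<le> B * ((\<integral>y. \<bar>y\<bar> \<partial>\<nu>) + R) * indicator {-R..R} x"
proof (cases "\<bar>x\<bar> \<le> R")
  case True
  have "\<bar>D2 s x * callf \<nu> x\<bar> = \<bar>D2 s x\<bar> * callf \<nu> x" using call_nonneg[of \<nu> x] by (simp add: abs_mult)
  also have "\<dots> \<le> B * ((\<integral>y. \<bar>y\<bar> \<partial>\<nu>) + R)"
    using B_bound(3)[OF assms(2), of x] callf_le[OF assms(1), of x] True call_nonneg[of \<nu> x] B_pos
    by (intro mult_mono) auto
  finally have a: "\<bar>D2 s x * callf \<nu> x\<bar> \<le> B * ((\<integral>y. \<bar>y\<bar> \<partial>\<nu>) + R)" .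
  have "x \<in> {-R..R}" using True by auto
  then show ?thesis using a by simp
next
  case False
  then have "x \<notin> {-R..R}" by auto
  then show ?thesis using D2_zero False by simp
qed

lemma D2_call_integrable:
  assumes "P2c \<nu>" "s \<in> {0..1}"
  shows "integrable lborel (\<lambda>x. D2 s x * callf \<nu> x)"
proof (rule bound_by_integrable[OF _ _ D2_call_bound[OF assms]])
  show "integrable lborel (\<lambda>x. B * ((\<integral>y. \<bar>y\<bar> \<partial>\<nu>) + R) * indicat_real {- R..R} x)"
    using R_pos by (intro integrable_mult_right integrable_real_indicator) auto
  show "(\<lambda>x. D2 s x * callf \<nu> x) \<in> borel_measurable lborel"
    using callf_meas[OF assms(1)] by measurable
qed

lemma second_deriv_identity:
  assumes nu: "P2c \<nu>" and s: "s \<in> {0..1}"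
  shows "(\<integral>x. D2 s x * callf \<nu> x \<partial>lborel) = (\<integral>y. \<phi> s y \<partial>\<nu>)"
proof -
  interpret pair_sigma_finite lborel \<nu> using pair_sf_lborel[OF P2c_sf[OF nu]] .
  define f where "f = (\<lambda>x y. D2 s x * max 0 (y - x))"
  have fm: "(\<lambda>(x, y). f x y) \<in> borel_measurable (lborel \<Otimes>\<^sub>M \<nu>)"
    unfolding f_def by (rule meas_pair) (use P2c_sets[OF nu] in \<open>auto simp flip: borel_prod\<close>)
  have int: "integrable (lborel \<Otimes>\<^sub>M \<nu>) (case_prod f)"
  proof (rule Fubini_integrable[OF fm])
    have "(\<lambda>x. \<integral>y. norm (f x y) \<partial>\<nu>) = (\<lambda>x. \<bar>D2 s x * callf \<nu> x\<bar>)"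
      unfolding f_def callf_def by (auto simp: abs_mult call_nonneg callf_def[symmetric])
    then show "integrable lborel (\<lambda>x. \<integral>y. norm (case_prod f (x, y)) \<partial>\<nu>)"
      using D2_call_integrable[OF nu s] by simp
    show "AE x in lborel. integrable \<nu> (\<lambda>y. case_prod f (x, y))"
      unfolding f_def using int_call[OF nu] by simp
  qed
  have "(\<integral>x. D2 s x * callf \<nu> x \<partial>lborel) = (\<integral>x. (\<integral>y. f x y \<partial>\<nu>) \<partial>lborel)"
    unfolding f_def callf_def by simp
  also have "\<dots> = (\<integral>y. (\<integral>x. f x y \<partial>lborel) \<partial>\<nu>)" using Fubini_integral[OF int] by simp
  also have "\<dots> = (\<integral>y. \<phi> s y \<partial>\<nu>)" unfolding f_def inner_ftc ..
  finally show ?thesis .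
qed

end


lemma cont_bdd01:
  assumes "continuous_on {0..1} (f :: real \<Rightarrow> real)"
  shows "\<exists>K\<ge>0. \<forall>s\<in>{0..1}. \<bar>f s\<bar> \<le> K"
proof -
  have "compact (f ` {0..1})" by (rule compact_continuous_image[OF assms compact_Icc])
  then obtain K where "K > 0" "\<And>y. y \<in> f ` {0..1} \<Longrightarrow> norm y \<le> K"
    using compact_imp_bounded bounded_pos by metis
  then show ?thesis by (intro exI[of _ K]) auto
qed

lemma P2c_emeasure_fin: assumes "P2c \<nu>" shows "emeasure \<nu> A < \<infinity>"
  using finite_measure.emeasure_finite[OF P2c_fin[OF assms], of A] by (simp add: less_top)

lemma bound_by_integrable':
  fixes f g :: "'a \<Rightarrow> real"
  assumes "integrable M g" "f \<in> borel_measurable M" "\<And>x. \<bar>f x\<bar> \<le> g x"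
  shows "integrable M f"
proof -
  have ae: "AE x in M. norm (f x) \<le> norm (g x)" using assms(3) by (auto intro: order_trans[OF _ abs_ge_self])
  show ?thesis using Bochner_Integration.integrable_bound[OF assms(1) assms(2) ae] .
qed

context testf
begin

lemma meas_D1_pair: "(\<lambda>p. D1 (fst p) (snd p)) \<in> borel_measurable (borel \<Otimes>\<^sub>M borel)"
  using meas_D1 unfolding borel_prod by (simp add: case_prod_beta')
lemma meas_phi_pair: "(\<lambda>p. \<phi> (fst p) (snd p)) \<in> borel_measurable (borel \<Otimes>\<^sub>M borel)"
  using meas_phi unfolding borel_prod by (simp add: case_prod_beta')

lemma time_identity:
  assumes nu: "P2c \<nu>"
    and c: "\<And>s. (c has_real_derivative c' s) (at s)" and c': "continuous_on UNIV c'"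
  shows "set_integrable lborel {0..1} (\<lambda>s. c s * (\<integral>x. D1 s x \<partial>\<nu>))"
    and "set_integrable lborel {0..1} (\<lambda>s. c' s * (\<integral>x. \<phi> s x \<partial>\<nu>))"
    and "(\<integral>s\<in>{0..1}. c s * (\<integral>x. D1 s x \<partial>\<nu>) \<partial>lborel) + (\<integral>s\<in>{0..1}. c' s * (\<integral>x. \<phi> s x \<partial>\<nu>) \<partial>lborel) = 0"
proof -
  interpret pair_sigma_finite lborel \<nu> using pair_sf_lborel[OF P2c_sf[OF nu]] .
  interpret prob_space \<nu> using P2c_prob[OF nu] .
  have cc: "continuous_on UNIV c" using c by (meson DERIV_isCont continuous_at_imp_continuous_on)
  obtain K1 where K1: "K1 \<ge> 0" "\<And>s. s \<in> {0..1} \<Longrightarrow> \<bar>c s\<bar> \<le> K1"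
    using cont_bdd01[OF continuous_on_subset[OF cc]] by blast
  obtain K2 where K2: "K2 \<ge> 0" "\<And>s. s \<in> {0..1} \<Longrightarrow> \<bar>c' s\<bar> \<le> K2"
    using cont_bdd01[OF continuous_on_subset[OF c']] by blast
  have cm[measurable]: "c \<in> borel_measurable borel" by (rule borel_measurable_continuous_onI[OF cc])
  have c'm[measurable]: "c' \<in> borel_measurable borel" by (rule borel_measurable_continuous_onI[OF c'])
  have sets_eq: "sets (lborel \<Otimes>\<^sub>M \<nu>) = sets (borel \<Otimes>\<^sub>M borel)"
    by (rule sets_pair_measure_cong) (simp_all add: P2c_sets[OF nu])
  have mp: "borel_measurable (lborel \<Otimes>\<^sub>M \<nu>) = (borel_measurable (borel \<Otimes>\<^sub>M borel) :: (real \<times> real \<Rightarrow> real) set)"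
    by (rule measurable_cong_sets[OF sets_eq refl])
  note [measurable] = meas_D1_pair meas_phi_pair
  define g where "g = (\<lambda>(s, x). indicator {0..1::real} s * (c s * D1 s x + c' s * \<phi> s x))"
  have gm: "g \<in> borel_measurable (lborel \<Otimes>\<^sub>M \<nu>)" unfolding mp g_def case_prod_beta' by measurable
  have gb: "\<bar>g (s, x)\<bar> \<le> (K1 * B + K2 * B) * indicator ({0..1} \<times> UNIV) (s, x)" for s x
  proof (cases "s \<in> {0..1}")
    case True
    have "\<bar>c s * D1 s x + c' s * \<phi> s x\<bar> \<le> \<bar>c s\<bar> * \<bar>D1 s x\<bar> + \<bar>c' s\<bar> * \<bar>\<phi> s x\<bar>"
      by (simp add: abs_mult[symmetric] abs_triangle_ineq)
    also have "\<dots> \<le> K1 * B + K2 * B"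
      using K1 K2 B_bound[OF True] True
      by (intro add_mono mult_mono) auto
    finally show ?thesis using True by (simp add: g_def)
  qed (simp add: g_def)
  have gi: "integrable (lborel \<Otimes>\<^sub>M \<nu>) g"
  proof (rule bound_by_integrable'[OF _ gm])
    have "emeasure (lborel \<Otimes>\<^sub>M \<nu>) ({0..1::real} \<times> UNIV) = emeasure lborel {0..1::real} * emeasure \<nu> UNIV"
      using P2c_sets[OF nu] P2c_space[OF nu] using sigma_finite_measure.emeasure_pair_measure_Times[OF P2c_sf[OF nu], where N=lborel and A="{0..1::real}" and B=UNIV]
      by simp
    also have "\<dots> < \<infinity>" using P2c_emeasure_fin[OF nu] by (simp add: ennreal_mult_less_top)
    finally have "emeasure (lborel \<Otimes>\<^sub>M \<nu>) ({0..1::real} \<times> UNIV) < \<infinity>" .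
    moreover have "{0..1::real} \<times> (UNIV :: real set) \<in> sets (lborel \<Otimes>\<^sub>M \<nu>)"
      using P2c_sets[OF nu] P2c_space[OF nu] by (metis pair_measureI sets_lborel atLeastAtMost_borel sets.top)
    ultimately show "integrable (lborel \<Otimes>\<^sub>M \<nu>) (\<lambda>p. (K1 * B + K2 * B) * indicator ({0..1::real} \<times> (UNIV::real set)) p)"
      by (intro integrable_mult_right integrable_real_indicator) auto
  qed (use gb in auto)
  have inner0: "(\<integral>s. g (s, x) \<partial>lborel) = 0" for x
  proof -
    have "(\<integral>s. g (s, x) \<partial>lborel) = (LBINT s. indicat_real {0..1} s *\<^sub>R (c s * D1 s x + c' s * \<phi> s x))"
      by (simp add: g_def)
    also have "\<dots> = c 1 * \<phi> 1 x - c 0 * \<phi> 0 x"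
    proof (rule integral_FTC_atLeastAtMost)
      fix s :: real
      have "((\<lambda>s. c s * \<phi> s x) has_real_derivative c' s * \<phi> s x + D1 s x * c s) (at s)"
        by (rule DERIV_mult[OF c deriv_t])
      then show "((\<lambda>s. c s * \<phi> s x) has_vector_derivative c s * D1 s x + c' s * \<phi> s x) (at s within {0..1})"
        by (auto intro!: has_field_derivative_at_within simp: algebra_simps simp flip: has_real_derivative_iff_has_vector_derivative)
    next
      show "continuous_on {0..1} (\<lambda>s. c s * D1 s x + c' s * \<phi> s x)"
        by (intro continuous_intros continuous_on_subset[OF cc] continuous_on_subset[OF c']
              continuous_on_subset[OF cont_slice_t[OF cont_D1]] continuous_on_subset[OF cont_slice_t[OF cont_phi]]) auto
    qed simp
    also have "\<dots> = 0" by (simp add: phi_zero_time)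
    finally show ?thesis .
  qed
  have D1s[measurable]: "D1 s \<in> borel_measurable borel" for s
    by (rule borel_measurable_continuous_onI[OF cont_slice[OF cont_D1]])
  have phis[measurable]: "\<phi> s \<in> borel_measurable borel" for s
    by (rule borel_measurable_continuous_onI[OF cont_slice[OF cont_phi]])
  have intD1: "integrable \<nu> (D1 s)" and intphi: "integrable \<nu> (\<phi> s)" and
     bD1: "\<bar>\<integral>x. D1 s x \<partial>\<nu>\<bar> \<le> B" and bphi: "\<bar>\<integral>x. \<phi> s x \<partial>\<nu>\<bar> \<le> B" if s: "s \<in> {0..1}" for s
  proof -
    show i1: "integrable \<nu> (D1 s)"
      by (rule bound_by_integrable'[of _ "\<lambda>_. B"]) (auto intro!: P2c_measI[OF nu] B_bound[OF s])
    show i2: "integrable \<nu> (\<phi> s)"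
      by (rule bound_by_integrable'[of _ "\<lambda>_. B"]) (auto intro!: P2c_measI[OF nu] B_bound[OF s])
    have "\<bar>\<integral>x. D1 s x \<partial>\<nu>\<bar> \<le> (\<integral>x. \<bar>D1 s x\<bar> \<partial>\<nu>)" using integral_abs_bound[of \<nu> "D1 s"] by simp
    also have "\<dots> \<le> (\<integral>x. B \<partial>\<nu>)" using i1 B_bound[OF s] by (intro integral_mono) auto
    finally show "\<bar>\<integral>x. D1 s x \<partial>\<nu>\<bar> \<le> B" by (simp add: prob_space)
    have "\<bar>\<integral>x. \<phi> s x \<partial>\<nu>\<bar> \<le> (\<integral>x. \<bar>\<phi> s x\<bar> \<partial>\<nu>)" using integral_abs_bound[of \<nu> "\<phi> s"] by simp
    also have "\<dots> \<le> (\<integral>x. B \<partial>\<nu>)" using i2 B_bound[OF s] by (intro integral_mono) auto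
    finally show "\<bar>\<integral>x. \<phi> s x \<partial>\<nu>\<bar> \<le> B" by (simp add: prob_space)
  qed
  have mD1i[measurable]: "(\<lambda>s. \<integral>x. D1 s x \<partial>\<nu>) \<in> borel_measurable borel"
  proof -
    have "(\<lambda>(s, x). D1 s x) \<in> borel_measurable (borel \<Otimes>\<^sub>M \<nu>)"
      by (rule meas_pair[OF _ P2c_sets[OF nu] meas_D1]) simp
    then show ?thesis using sigma_finite_measure.borel_measurable_lebesgue_integral[OF P2c_sf[OF nu], of "\<lambda>s x. D1 s x" borel] by simp
  qed
  have mphii[measurable]: "(\<lambda>s. \<integral>x. \<phi> s x \<partial>\<nu>) \<in> borel_measurable borel"
  proof -
    have "(\<lambda>(s, x). \<phi> s x) \<in> borel_measurable (borel \<Otimes>\<^sub>M \<nu>)"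
      by (rule meas_pair[OF _ P2c_sets[OF nu] meas_phi]) simp
    then show ?thesis using sigma_finite_measure.borel_measurable_lebesgue_integral[OF P2c_sf[OF nu], of "\<lambda>s x. \<phi> s x" borel] by simp
  qed
  have ind_int: "integrable lborel (\<lambda>s::real. K * indicat_real {0..1} s)" for K
    by (intro integrable_mult_right integrable_real_indicator) auto
  show si1: "set_integrable lborel {0..1} (\<lambda>s. c s * (\<integral>x. D1 s x \<partial>\<nu>))"
    unfolding set_integrable_def
  proof (rule bound_by_integrable'[OF ind_int[of "K1 * B"]])
    show "(\<lambda>s. indicat_real {0..1} s *\<^sub>R (c s * (\<integral>x. D1 s x \<partial>\<nu>))) \<in> borel_measurable lborel" by measurable
    fix s show "\<bar>indicat_real {0..1} s *\<^sub>R (c s * (\<integral>x. D1 s x \<partial>\<nu>))\<bar> \<le> K1 * B * indicat_real {0..1} s"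
      using K1 bD1 B_pos by (cases "s \<in> {0..1}") (auto simp: abs_mult intro!: mult_mono)
  qed
  show si2: "set_integrable lborel {0..1} (\<lambda>s. c' s * (\<integral>x. \<phi> s x \<partial>\<nu>))"
    unfolding set_integrable_def
  proof (rule bound_by_integrable'[OF ind_int[of "K2 * B"]])
    show "(\<lambda>s. indicat_real {0..1} s *\<^sub>R (c' s * (\<integral>x. \<phi> s x \<partial>\<nu>))) \<in> borel_measurable lborel" by measurable
    fix s show "\<bar>indicat_real {0..1} s *\<^sub>R (c' s * (\<integral>x. \<phi> s x \<partial>\<nu>))\<bar> \<le> K2 * B * indicat_real {0..1} s"
      using K2 bphi B_pos by (cases "s \<in> {0..1}") (auto simp: abs_mult intro!: mult_mono)
  qed
  have slice: "(\<integral>x. g (s, x) \<partial>\<nu>) = indicat_real {0..1} s *\<^sub>R (c s * (\<integral>x. D1 s x \<partial>\<nu>)) + indicat_real {0..1} s *\<^sub>R (c' s * (\<integral>x. \<phi> s x \<partial>\<nu>))" for s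
  proof (cases "s \<in> {0..1}")
    case True
    have "(\<integral>x. g (s, x) \<partial>\<nu>) = (\<integral>x. c s * D1 s x + c' s * \<phi> s x \<partial>\<nu>)"
      using True by (simp add: g_def)
    also have "\<dots> = c s * (\<integral>x. D1 s x \<partial>\<nu>) + c' s * (\<integral>x. \<phi> s x \<partial>\<nu>)"
      using intD1[OF True] intphi[OF True] by simp
    finally show ?thesis using True by simp
  qed (simp add: g_def)
  have "(\<integral>s\<in>{0..1}. c s * (\<integral>x. D1 s x \<partial>\<nu>) \<partial>lborel) + (\<integral>s\<in>{0..1}. c' s * (\<integral>x. \<phi> s x \<partial>\<nu>) \<partial>lborel)
      = (\<integral>s. (\<integral>x. g (s, x) \<partial>\<nu>) \<partial>lborel)"
    unfolding slice set_lebesgue_integral_def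
    using si1 si2 unfolding set_integrable_def by (subst Bochner_Integration.integral_add) auto
  also have "\<dots> = (\<integral>x. (\<integral>s. g (s, x) \<partial>lborel) \<partial>\<nu>)"
    using Fubini_integral[of "\<lambda>s x. g (s, x)"] gi by simp
  also have "\<dots> = 0" by (simp add: inner0)
  finally show "(\<integral>s\<in>{0..1}. c s * (\<integral>x. D1 s x \<partial>\<nu>) \<partial>lborel) + (\<integral>s\<in>{0..1}. c' s * (\<integral>x. \<phi> s x \<partial>\<nu>) \<partial>lborel) = 0" .
qed

end


definition msum :: "'a measure \<Rightarrow> 'a measure \<Rightarrow> 'a measure" where
  "msum M N = measure_of (space M) (sets M) (\<lambda>A. emeasure M A + emeasure N A)"

lemma msum_sets[simp]: "sets (msum M N) = sets M"
  unfolding msum_def by (simp add: sets_measure_of[OF sets.space_closed] sets.sigma_sets_eq)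

lemma msum_space[simp]: "space (msum M N) = space M"
  unfolding msum_def by (simp add: space_measure_of[OF sets.space_closed])

lemma msum_emeasure:
  assumes "sets N = sets M" "A \<in> sets M"
  shows "emeasure (msum M N) A = emeasure M A + emeasure N A"
  unfolding msum_def
proof (rule emeasure_measure_of_sigma)
  show "sigma_algebra (space M) (sets M)" by (rule sets.sigma_algebra_axioms)
  show "positive (sets M) (\<lambda>A. emeasure M A + emeasure N A)" by (simp add: positive_def)
  show "countably_additive (sets M) (\<lambda>A. emeasure M A + emeasure N A)"
  proof (rule countably_additiveI)
    fix F :: "nat \<Rightarrow> 'a set" assume F: "range F \<subseteq> sets M" "disjoint_family F" "\<Union> (range F) \<in> sets M"
    have "(\<Sum>i. emeasure M (F i) + emeasure N (F i)) = (\<Sum>i. emeasure M (F i)) + (\<Sum>i. emeasure N (F i))"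
      by (rule suminf_add[symmetric]) (rule summableI)+
    also have "\<dots> = emeasure M (\<Union> (range F)) + emeasure N (\<Union> (range F))"
      using suminf_emeasure[of F M] suminf_emeasure[of F N] F assms(1) by simp
    finally show "(\<Sum>i. emeasure M (F i) + emeasure N (F i)) = emeasure M (\<Union> (range F)) + emeasure N (\<Union> (range F))" .
  qed
qed (fact assms)

lemma msum_finite:
  assumes "finite_measure M" "finite_measure N" "sets N = sets M"
  shows "finite_measure (msum M N)"
proof
  have e: "emeasure (msum M N) (space M) = emeasure M (space M) + emeasure N (space M)"
    by (rule msum_emeasure[OF assms(3) sets.top])
  have a: "emeasure M (space M) \<noteq> \<infinity>" using finite_measure.emeasure_finite[OF assms(1), of "space M"] by simp
  have b: "emeasure N (space M) \<noteq> \<infinity>" using finite_measure.emeasure_finite[OF assms(2), of "space M"] by simp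
  show "emeasure (msum M N) (space (msum M N)) \<noteq> \<infinity>"
    unfolding msum_space e using a b by (simp add: ennreal_add_eq_top)
qed

lemma msum_null:
  assumes "sets N = sets M" "A \<in> null_sets (msum M N)"
  shows "A \<in> null_sets M" "A \<in> null_sets N"
proof -
  have A: "A \<in> sets M" using assms(2) unfolding null_sets_def by simp
  have "emeasure (msum M N) A = 0" using assms(2) unfolding null_sets_def by simp
  then have z: "emeasure M A + emeasure N A = 0" using msum_emeasure[OF assms(1) A] by simp
  show "A \<in> null_sets M" using A z unfolding null_sets_def by simp
  show "A \<in> null_sets N" using A z assms(1) unfolding null_sets_def by simp
qed

lemma msum_ac1:
  assumes "sets N = sets M" shows "absolutely_continuous (msum M N) M"
  unfolding absolutely_continuous_def using msum_null[OF assms] by blast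

lemma msum_ac2:
  assumes "sets N = sets M" shows "absolutely_continuous (msum M N) N"
  unfolding absolutely_continuous_def using msum_null[OF assms] by blast

lemma ac_trans:
  assumes "absolutely_continuous M N" "absolutely_continuous N K" "sets N = sets M" "sets K = sets M"
  shows "absolutely_continuous M K"
  using assms unfolding absolutely_continuous_def by auto

lemma real_density:
  assumes M: "finite_measure M" and N: "finite_measure N" "sets N = sets M" "absolutely_continuous M N"
  shows "\<exists>f. f \<in> borel_measurable M \<and> (\<forall>x. f x \<ge> 0) \<and> density M (\<lambda>x. ennreal (f x)) = N"
proof -
  interpret M: finite_measure M by fact
  have sfN: "sigma_finite_measure N" using N(1) by (simp add: finite_measure.axioms(1))
  define f where "f = (\<lambda>x. enn2real (RN_deriv M N x))"
  have "AE x in M. RN_deriv M N x \<noteq> \<infinity>" by (rule M.RN_deriv_finite[OF sfN N(3) N(2)])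
  then have "AE x in M. ennreal (f x) = RN_deriv M N x"
    by eventually_elim (simp add: f_def less_top)
  then have "density M (\<lambda>x. ennreal (f x)) = density M (RN_deriv M N)"
    by (intro density_cong) (auto simp: f_def)
  also have "\<dots> = N" by (rule M.density_RN_deriv[OF N(3) N(2)])
  finally show ?thesis by (intro exI[of _ f]) (auto simp: f_def)
qed



definition al :: "real \<Rightarrow> real" where "al s = (1 - s)^3 * (1 + 3 * s)"
definition be :: "real \<Rightarrow> real" where "be s = 6 * s^2 * (1 - s)^2"
definition ga :: "real \<Rightarrow> real" where "ga s = s^3 * (4 - 3 * s)"
definition al' :: "real \<Rightarrow> real" where "al' s = - 12 * s * (1 - s)^2"
definition be' :: "real \<Rightarrow> real" where "be' s = 12 * s * (1 - s) * (1 - 2 * s)"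
definition ga' :: "real \<Rightarrow> real" where "ga' s = 12 * s^2 * (1 - s)"

lemma coef_sum: "al s + be s + ga s = 1"
  unfolding al_def be_def ga_def by (simp add: algebra_simps power2_eq_square power3_eq_cube)
lemma coef'_sum: "al' s + be' s + ga' s = 0"
  unfolding al'_def be'_def ga'_def by (simp add: algebra_simps power2_eq_square)
lemma coef_nonneg: "s \<in> {0..1} \<Longrightarrow> al s \<ge> 0" "be s \<ge> 0" "s \<in> {0..1} \<Longrightarrow> ga s \<ge> 0"
  unfolding al_def be_def ga_def by auto
lemma coef_01: "al 0 = 1" "be 0 = 0" "ga 0 = 0" "al 1 = 0" "be 1 = 0" "ga 1 = 1"
  by (simp_all add: al_def be_def ga_def)
lemma be_pos: "s \<in> {0<..<1} \<Longrightarrow> be s > 0" unfolding be_def by auto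

lemma al_deriv: "(al has_real_derivative al' s) (at s)"
proof -
  have "(al has_real_derivative (3 * (1 - s)^2 * (0 - 1)) * (1 + 3 * s) + (0 + 3 * 1) * (1 - s)^3) (at s)"
    unfolding al_def by (intro derivative_eq_intros) auto
  moreover have "(3 * (1 - s)^2 * (0 - 1)) * (1 + 3 * s) + (0 + 3 * 1) * (1 - s)^3 = al' s"
    unfolding al'_def by (simp add: algebra_simps power2_eq_square power3_eq_cube)
  ultimately show ?thesis by simp
qed

lemma be_deriv: "(be has_real_derivative be' s) (at s)"
proof -
  have "(be has_real_derivative 6 * (2 * s * 1) * (1 - s)^2 + 6 * s^2 * (2 * (1 - s) * (0 - 1))) (at s)"
    unfolding be_def by (intro derivative_eq_intros) auto
  moreover have "6 * (2 * s * 1) * (1 - s)^2 + 6 * s^2 * (2 * (1 - s) * (0 - 1)) = be' s"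
    unfolding be'_def by (simp add: algebra_simps power2_eq_square)
  ultimately show ?thesis by simp
qed

lemma ga_deriv: "(ga has_real_derivative ga' s) (at s)"
proof -
  have "(ga has_real_derivative (3 * s^2 * 1) * (4 - 3 * s) + (0 - 3 * 1) * s^3) (at s)"
    unfolding ga_def by (intro derivative_eq_intros) auto
  moreover have "(3 * s^2 * 1) * (4 - 3 * s) + (0 - 3 * 1) * s^3 = ga' s"
    unfolding ga'_def by (simp add: algebra_simps power2_eq_square power3_eq_cube)
  ultimately show ?thesis by simp
qed

lemma cont_coefs: "continuous_on UNIV al" "continuous_on UNIV be" "continuous_on UNIV ga"
  "continuous_on UNIV al'" "continuous_on UNIV be'" "continuous_on UNIV ga'"
  unfolding al_def be_def ga_def al'_def be'_def ga'_def by (intro continuous_intros)+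

lemma ratio_bounds: "s \<in> {0<..<1} \<Longrightarrow> (al' s)^2 \<le> 24 * be s" "s \<in> {0<..<1} \<Longrightarrow> (ga' s)^2 \<le> 24 * be s"
proof -
  assume s: "s \<in> {0<..<1}"
  have "(al' s)^2 = 24 * be s * (1 - s)^2" unfolding al'_def be_def by (simp add: algebra_simps power2_eq_square)
  moreover have "(1 - s)^2 \<le> 1" using s by (simp add: power_le_one)
  moreover have "be s \<ge> 0" by (rule coef_nonneg(2))
  ultimately show "(al' s)^2 \<le> 24 * be s" by (simp add: mult_left_le)
  have "(ga' s)^2 = 24 * be s * s^2" unfolding ga'_def be_def by (simp add: algebra_simps power2_eq_square)
  moreover have "s^2 \<le> 1" using s by (simp add: power_le_one)
  ultimately show "(ga' s)^2 \<le> 24 * be s" using \<open>be s \<ge> 0\<close> by (simp add: mult_left_le)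
qed



lemma dens_int:
  fixes f :: "real \<Rightarrow> real" and fi :: "real \<Rightarrow> real"
  assumes "fi \<in> borel_measurable M" "\<And>x. fi x \<ge> 0" "f \<in> borel_measurable M"
  shows "integrable (density M (\<lambda>x. ennreal (fi x))) f \<longleftrightarrow> integrable M (\<lambda>x. fi x * f x)"
    and "integral\<^sup>L (density M (\<lambda>x. ennreal (fi x))) f = (\<integral>x. fi x * f x \<partial>M)"
  using integrable_density[of f M fi] integral_density[of f M fi] assms by auto

lemma powr_q_bound:
  fixes y q :: real assumes "q \<ge> 0"
  shows "(1 + \<bar>y\<bar>) powr q \<le> 2 powr q * (1 + \<bar>y\<bar> powr q)"
proof -
  have "(1 + \<bar>y\<bar>) powr q \<le> (2 * max 1 \<bar>y\<bar>) powr q"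
    using assms by (intro powr_mono2) auto
  also have "\<dots> = 2 powr q * (max 1 \<bar>y\<bar>) powr q" by (simp add: powr_mult)
  also have "(max 1 \<bar>y\<bar>) powr q \<le> 1 + \<bar>y\<bar> powr q"
    by (cases "\<bar>y\<bar> \<le> 1") (auto simp: max_def)
  then have "2 powr q * (max 1 \<bar>y\<bar>) powr q \<le> 2 powr q * (1 + \<bar>y\<bar> powr q)"
    by (intro mult_left_mono) auto
  finally show ?thesis .
qed

locale constr =
  fixes \<mu>0 \<mu>1 :: "real measure" and q :: real
  assumes h0: "P2c \<mu>0" and h1: "P2c \<mu>1" and cx: "cx_le \<mu>0 \<mu>1" and q4: "q > 4"
    and mom: "(\<integral>\<^sup>+ x. ennreal (\<bar>x\<bar> powr q) \<partial>\<mu>1) < \<infinity>"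
begin

definition "pp = (3 * q - 2) / 2"
definition "et = eta pp"

lemma pp: "pp > 5" "q < pp - 1" using q4 by (simp_all add: pp_def field_simps)

lemma het: "P2c et" using P2c_eta pp by (simp add: et_def)

lemma et_mom: "integrable et (\<lambda>y. (1 + \<bar>y\<bar>) powr q)"
  unfolding et_def using pp by (intro eta_integrable_pow) auto

lemma mu1_mom: "integrable \<mu>1 (\<lambda>y. (1 + \<bar>y\<bar>) powr q)"
proof -
  interpret prob_space \<mu>1 using P2c_prob[OF h1] .
  have "integrable \<mu>1 (\<lambda>y. \<bar>y\<bar> powr q)"
    by (rule integrableI_bounded) (use mom in \<open>auto intro!: P2c_measI[OF h1]\<close>)
  then have i: "integrable \<mu>1 (\<lambda>y. 2 powr q * (1 + \<bar>y\<bar> powr q))" by simp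
  have b: "\<bar>(1 + \<bar>y\<bar>) powr q\<bar> \<le> 2 powr q * (1 + \<bar>y\<bar> powr q)" for y
  proof -
    have "\<bar>(1 + \<bar>y\<bar>) powr q\<bar> = (1 + \<bar>y\<bar>) powr q" by simp
    then show ?thesis using powr_q_bound[of q y] q4 by linarith
  qed
  have m: "(\<lambda>y. (1 + \<bar>y\<bar>) powr q) \<in> borel_measurable \<mu>1" by (rule P2c_measI[OF h1]) measurable
  show ?thesis by (rule bound_by_integrable[OF i m b])
qed

definition "M = msum (msum \<mu>0 \<mu>1) et"

lemma M_sets[simp]: "sets M = sets borel" and M_space[simp]: "space M = UNIV"
  using P2c_sets[OF h0] P2c_space[OF h0] by (simp_all add: M_def)

lemma M_meas: "borel_measurable M = borel_measurable borel"
  by (rule measurable_cong_sets) simp_all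

lemma M_measI: "f \<in> borel_measurable borel \<Longrightarrow> f \<in> borel_measurable M"
  by (subst measurable_cong_sets[OF M_sets refl])

lemma M_fin: "finite_measure M"
  unfolding M_def
  by (intro msum_finite P2c_fin h0 h1 het) (simp_all add: P2c_sets h0 h1 het)

lemma M_ac: "absolutely_continuous M \<mu>0" "absolutely_continuous M \<mu>1" "absolutely_continuous M et"
proof -
  have s01: "sets \<mu>1 = sets \<mu>0" using P2c_sets h0 h1 by simp
  have s: "sets et = sets (msum \<mu>0 \<mu>1)" using P2c_sets h0 het by simp
  have a: "absolutely_continuous M (msum \<mu>0 \<mu>1)" unfolding M_def by (rule msum_ac1[OF s])
  show "absolutely_continuous M et" unfolding M_def by (rule msum_ac2[OF s])
  show "absolutely_continuous M \<mu>0"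
    by (rule ac_trans[OF a msum_ac1[OF s01]]) (simp_all add: M_def P2c_sets h0)
  show "absolutely_continuous M \<mu>1"
    by (rule ac_trans[OF a msum_ac2[OF s01]]) (simp_all add: M_def P2c_sets h0 h1)
qed

definition "dens \<nu> = (SOME f. f \<in> borel_measurable M \<and> (\<forall>x. f x \<ge> 0) \<and> density M (\<lambda>x. ennreal (f x)) = \<nu>)"

lemma dens:
  assumes "P2c \<nu>" "absolutely_continuous M \<nu>"
  shows "dens \<nu> \<in> borel_measurable borel" "\<And>x. dens \<nu> x \<ge> 0" "density M (\<lambda>x. ennreal (dens \<nu> x)) = \<nu>"
proof -
  have "\<exists>f. f \<in> borel_measurable M \<and> (\<forall>x. f x \<ge> 0) \<and> density M (\<lambda>x. ennreal (f x)) = \<nu>"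
    by (rule real_density[OF M_fin P2c_fin[OF assms(1)] _ assms(2)]) (simp add: P2c_sets[OF assms(1)])
  from someI_ex[OF this] show "dens \<nu> \<in> borel_measurable borel" "\<And>x. dens \<nu> x \<ge> 0" "density M (\<lambda>x. ennreal (dens \<nu> x)) = \<nu>"
    unfolding dens_def M_meas by auto
qed

definition "f0 = dens \<mu>0"
definition "f1 = dens \<mu>1"
definition "fe = dens et"

lemmas d0 = dens[OF h0 M_ac(1), folded f0_def]
lemmas d1 = dens[OF h1 M_ac(2), folded f1_def]
lemmas de = dens[OF het M_ac(3), folded fe_def]

lemma f_meas[measurable]: "f0 \<in> borel_measurable borel" "f1 \<in> borel_measurable borel" "fe \<in> borel_measurable borel"
  using d0(1) d1(1) de(1) .

definition "DD s x = al s * f0 x + be s * fe x + ga s * f1 x"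
definition "mu s = density M (\<lambda>x. ennreal (DD s x))"

lemma DD_nonneg: "s \<in> {0..1} \<Longrightarrow> DD s x \<ge> 0"
  unfolding DD_def using coef_nonneg d0(2) d1(2) de(2) by (intro add_nonneg_nonneg mult_nonneg_nonneg) auto

lemma DD_meas[measurable]: "DD s \<in> borel_measurable borel" unfolding DD_def by measurable

lemma mu_0: "mu 0 = \<mu>0" and mu_1: "mu 1 = \<mu>1"
  using d0(3) d1(3) by (simp_all add: mu_def DD_def coef_01)

lemma mu_sets[simp]: "sets (mu s) = sets borel" "space (mu s) = UNIV"
  by (simp_all add: mu_def)

lemma mix_int:
  assumes s: "s \<in> {0..1}" and fm: "f \<in> borel_measurable borel"
    and i: "integrable \<mu>0 f" "integrable et f" "integrable \<mu>1 f"
  shows "integrable (mu s) f"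
    and "integral\<^sup>L (mu s) f = al s * integral\<^sup>L \<mu>0 f + be s * integral\<^sup>L et f + ga s * integral\<^sup>L \<mu>1 f"
proof -
  have fM: "f \<in> borel_measurable M" using fm by (rule M_measI)
  have j0: "integrable M (\<lambda>x. f0 x * f x)" using i(1) dens_int(1)[OF M_measI[OF d0(1)] d0(2) fM] d0(3) by simp
  have je: "integrable M (\<lambda>x. fe x * f x)" using i(2) dens_int(1)[OF M_measI[OF de(1)] de(2) fM] de(3) by simp
  have j1: "integrable M (\<lambda>x. f1 x * f x)" using i(3) dens_int(1)[OF M_measI[OF d1(1)] d1(2) fM] d1(3) by simp
  have e: "(\<lambda>x. DD s x * f x) = (\<lambda>x. al s * (f0 x * f x) + be s * (fe x * f x) + ga s * (f1 x * f x))"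
    by (auto simp: DD_def algebra_simps)
  have jD: "integrable M (\<lambda>x. DD s x * f x)" unfolding e using j0 je j1 by auto
  show "integrable (mu s) f" unfolding mu_def
    using dens_int(1)[OF M_measI[OF DD_meas] DD_nonneg[OF s] fM] jD by simp
  have "integral\<^sup>L (mu s) f = (\<integral>x. DD s x * f x \<partial>M)" unfolding mu_def
    using dens_int(2)[OF M_measI[OF DD_meas] DD_nonneg[OF s] fM] by simp
  also have "\<dots> = al s * (\<integral>x. f0 x * f x \<partial>M) + be s * (\<integral>x. fe x * f x \<partial>M) + ga s * (\<integral>x. f1 x * f x \<partial>M)"
    unfolding e using j0 je j1 by simp
  also have "(\<integral>x. f0 x * f x \<partial>M) = integral\<^sup>L \<mu>0 f" using dens_int(2)[OF M_measI[OF d0(1)] d0(2) fM] d0(3) by simp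
  also have "(\<integral>x. fe x * f x \<partial>M) = integral\<^sup>L et f" using dens_int(2)[OF M_measI[OF de(1)] de(2) fM] de(3) by simp
  also have "(\<integral>x. f1 x * f x \<partial>M) = integral\<^sup>L \<mu>1 f" using dens_int(2)[OF M_measI[OF d1(1)] d1(2) fM] d1(3) by simp
  finally show "integral\<^sup>L (mu s) f = al s * integral\<^sup>L \<mu>0 f + be s * integral\<^sup>L et f + ga s * integral\<^sup>L \<mu>1 f" .
qed

lemma mix_nn:
  assumes s: "s \<in> {0..1}" and gm: "g \<in> borel_measurable borel"
  shows "integral\<^sup>N (mu s) g = ennreal (al s) * integral\<^sup>N \<mu>0 g + ennreal (be s) * integral\<^sup>N et g + ennreal (ga s) * integral\<^sup>N \<mu>1 g"
proof -
  have gM[measurable]: "g \<in> borel_measurable M" using gm by (rule M_measI)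
  have [measurable]: "f0 \<in> borel_measurable M" "fe \<in> borel_measurable M" "f1 \<in> borel_measurable M"
    using M_measI[OF d0(1)] M_measI[OF de(1)] M_measI[OF d1(1)] .
  have nd: "integral\<^sup>N (density M (\<lambda>x. ennreal (f x))) g = (\<integral>\<^sup>+x. ennreal (f x) * g x \<partial>M)"
    if "f \<in> borel_measurable borel" for f
    by (rule nn_integral_density) (use M_measI[OF that] in auto)
  have e: "ennreal (DD s x) * g x = ennreal (al s) * (ennreal (f0 x) * g x) + ennreal (be s) * (ennreal (fe x) * g x) + ennreal (ga s) * (ennreal (f1 x) * g x)" for x
  proof -
    have a: "al s \<ge> 0" "ga s \<ge> 0" "be s \<ge> 0" using coef_nonneg(1)[OF s] coef_nonneg(3)[OF s] coef_nonneg(2) by auto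
    have nn: "0 \<le> al s * f0 x" "0 \<le> be s * fe x" "0 \<le> ga s * f1 x"
      using a d0(2)[of x] d1(2)[of x] de(2)[of x] by auto
    have "ennreal (DD s x) = ennreal (al s * f0 x) + ennreal (be s * fe x) + ennreal (ga s * f1 x)"
      unfolding DD_def using nn by simp
    also have "\<dots> = ennreal (al s) * ennreal (f0 x) + ennreal (be s) * ennreal (fe x) + ennreal (ga s) * ennreal (f1 x)"
      using a d0(2)[of x] d1(2)[of x] de(2)[of x] by (simp add: ennreal_mult)
    finally show ?thesis by (simp add: distrib_right mult.assoc)
  qed
  have "integral\<^sup>N (mu s) g = (\<integral>\<^sup>+x. ennreal (DD s x) * g x \<partial>M)" unfolding mu_def by (rule nd) simp
  also have "\<dots> = (\<integral>\<^sup>+x. ennreal (al s) * (ennreal (f0 x) * g x) + ennreal (be s) * (ennreal (fe x) * g x) + ennreal (ga s) * (ennreal (f1 x) * g x) \<partial>M)"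
    unfolding e ..
  also have "\<dots> = (\<integral>\<^sup>+x. ennreal (al s) * (ennreal (f0 x) * g x) + ennreal (be s) * (ennreal (fe x) * g x) \<partial>M) + (\<integral>\<^sup>+x. ennreal (ga s) * (ennreal (f1 x) * g x) \<partial>M)"
    by (rule nn_integral_add) measurable
  also have "(\<integral>\<^sup>+x. ennreal (al s) * (ennreal (f0 x) * g x) + ennreal (be s) * (ennreal (fe x) * g x) \<partial>M) = (\<integral>\<^sup>+x. ennreal (al s) * (ennreal (f0 x) * g x) \<partial>M) + (\<integral>\<^sup>+x. ennreal (be s) * (ennreal (fe x) * g x) \<partial>M)"
    by (rule nn_integral_add) measurable
  also have "(\<integral>\<^sup>+x. ennreal (al s) * (ennreal (f0 x) * g x) \<partial>M) = ennreal (al s) * (\<integral>\<^sup>+x. ennreal (f0 x) * g x \<partial>M)"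
    by (rule nn_integral_cmult) measurable
  also have "(\<integral>\<^sup>+x. ennreal (be s) * (ennreal (fe x) * g x) \<partial>M) = ennreal (be s) * (\<integral>\<^sup>+x. ennreal (fe x) * g x \<partial>M)"
    by (rule nn_integral_cmult) measurable
  also have "(\<integral>\<^sup>+x. ennreal (ga s) * (ennreal (f1 x) * g x) \<partial>M) = ennreal (ga s) * (\<integral>\<^sup>+x. ennreal (f1 x) * g x \<partial>M)"
    by (rule nn_integral_cmult) measurable
  also have "(\<integral>\<^sup>+x. ennreal (f0 x) * g x \<partial>M) = integral\<^sup>N \<mu>0 g" using nd[OF d0(1)] d0(3) by simp
  also have "(\<integral>\<^sup>+x. ennreal (fe x) * g x \<partial>M) = integral\<^sup>N et g" using nd[OF de(1)] de(3) by simp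
  also have "(\<integral>\<^sup>+x. ennreal (f1 x) * g x \<partial>M) = integral\<^sup>N \<mu>1 g" using nd[OF d1(1)] d1(3) by simp
  finally show ?thesis .
qed

lemma P2c_mu: assumes s: "s \<in> {0..1}" shows "P2c (mu s)"
proof -
  have a: "al s \<ge> 0" "ga s \<ge> 0" "be s \<ge> 0" using coef_nonneg(1)[OF s] coef_nonneg(3)[OF s] coef_nonneg(2) by auto
  have one: "integral\<^sup>N \<nu> (\<lambda>x. 1) = 1" if "P2c \<nu>" for \<nu>
    using prob_space.emeasure_space_1[OF P2c_prob[OF that]] P2c_space[OF that] by simp
  have "emeasure (mu s) (space (mu s)) = integral\<^sup>N (mu s) (\<lambda>x. 1)" by simp
  also have "\<dots> = ennreal (al s) + ennreal (be s) + ennreal (ga s)"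
    using mix_nn[OF s, of "\<lambda>x. 1"] one[OF h0] one[OF h1] one[OF het] by simp
  also have "\<dots> = ennreal (al s + be s + ga s)" using a by simp
  also have "\<dots> = 1" by (simp add: coef_sum)
  finally have pr: "prob_space (mu s)" by (rule prob_spaceI)
  have fin: "integral\<^sup>N \<nu> (\<lambda>x. ennreal (x\<^sup>2)) < \<infinity>" if "P2c \<nu>" for \<nu>
    using that by (simp add: P2c_def)
  have "integral\<^sup>N (mu s) (\<lambda>x. ennreal (x\<^sup>2)) < \<infinity>"
    using mix_nn[OF s, of "\<lambda>x. ennreal (x\<^sup>2)"] fin[OF h0] fin[OF h1] fin[OF het]
    by (simp add: ennreal_mult_less_top)
  moreover have "integral\<^sup>L (mu s) (\<lambda>x. x) = 0"
    using mix_int(2)[OF s _ P2c_int_x[OF h0] P2c_int_x[OF het] P2c_int_x[OF h1]] P2c_mean[OF h0] P2c_mean[OF h1] P2c_mean[OF het]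
    by simp
  ultimately show ?thesis using pr by (simp add: P2c_def)
qed

end


lemma dens_lborel_measure:
  fixes h :: "real \<Rightarrow> real"
  assumes h: "\<And>x. h x \<ge> 0" "integrable lborel h" and A: "A \<in> sets borel"
  shows "measure (density lborel (\<lambda>x. ennreal (h x))) A = (\<integral>x. indicator A x * h x \<partial>lborel)"
proof -
  have hm[measurable]: "h \<in> borel_measurable borel" using h(2) by auto
  have i: "integrable lborel (\<lambda>x. indicator A x * h x)"
    using integrable_mult_indicator[OF _ h(2), of A] A by simp
  have "emeasure (density lborel (\<lambda>x. ennreal (h x))) A = (\<integral>\<^sup>+x. ennreal (h x) * indicator A x \<partial>lborel)"
    using A by (subst emeasure_density) auto
  also have "\<dots> = (\<integral>\<^sup>+x. ennreal (indicator A x * h x) \<partial>lborel)"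
    by (intro nn_integral_cong) (auto split: split_indicator)
  also have "\<dots> = ennreal (\<integral>x. indicator A x * h x \<partial>lborel)"
    by (rule nn_integral_eq_integral[OF i]) (use h(1) in \<open>auto split: split_indicator\<close>)
  finally show ?thesis unfolding measure_def using h(1) by (simp add: integral_nonneg_AE)
qed

lemma dens_lborel_fin:
  fixes h :: "real \<Rightarrow> real"
  assumes h: "\<And>x. h x \<ge> 0" "integrable lborel h"
  shows "fin_borel (density lborel (\<lambda>x. ennreal (h x)))"
  unfolding fin_borel_def
proof
  have hm[measurable]: "h \<in> borel_measurable borel" using h(2) by auto
  show "finite_measure (density lborel (\<lambda>x. ennreal (h x)))"
  proof
    have "emeasure (density lborel (\<lambda>x. ennreal (h x))) (space (density lborel (\<lambda>x. ennreal (h x)))) = (\<integral>\<^sup>+x. ennreal (h x) \<partial>lborel)"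
      by (subst emeasure_density) auto
    also have "\<dots> = ennreal (\<integral>x. h x \<partial>lborel)" by (rule nn_integral_eq_integral[OF h(2)]) (use h(1) in auto)
    finally show "emeasure (density lborel (\<lambda>x. ennreal (h x))) (space (density lborel (\<lambda>x. ennreal (h x)))) \<noteq> \<infinity>" by simp
  qed
qed simp

definition pn :: "(real \<Rightarrow> real) \<Rightarrow> real measure \<times> real measure" where
  "pn g = (density lborel (\<lambda>x. ennreal (max 0 (g x))), density lborel (\<lambda>x. ennreal (max 0 (- g x))))"

lemma pn_facts:
  fixes g :: "real \<Rightarrow> real"
  assumes g: "integrable lborel g"
  shows "fin_borel (fst (pn g))" "fin_borel (snd (pn g))"
    and "\<And>A. A \<in> sets borel \<Longrightarrow> sm_val (pn g) A = (\<integral>x\<in>A. g x \<partial>lborel)"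
    and "\<And>f. f \<in> borel_measurable borel \<Longrightarrow> integrable lborel (\<lambda>x. g x * f x) \<Longrightarrow> sm_int (pn g) f = (\<integral>x. g x * f x \<partial>lborel)"
proof -
  have gm[measurable]: "g \<in> borel_measurable borel" using g by auto
  have ip: "integrable lborel (\<lambda>x. max 0 (g x))" by (rule bound_by_integrable'[of _ "\<lambda>x. \<bar>g x\<bar>"]) (use g in auto)
  have im: "integrable lborel (\<lambda>x. max 0 (- g x))" by (rule bound_by_integrable'[of _ "\<lambda>x. \<bar>g x\<bar>"]) (use g in auto)
  show "fin_borel (fst (pn g))" unfolding pn_def fst_conv by (rule dens_lborel_fin[OF _ ip]) simp
  show "fin_borel (snd (pn g))" unfolding pn_def snd_conv by (rule dens_lborel_fin[OF _ im]) simp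
  show "sm_val (pn g) A = (\<integral>x\<in>A. g x \<partial>lborel)" if A: "A \<in> sets borel" for A
  proof -
    have "sm_val (pn g) A = (\<integral>x. indicator A x * max 0 (g x) \<partial>lborel) - (\<integral>x. indicator A x * max 0 (- g x) \<partial>lborel)"
      unfolding sm_val_def pn_def using dens_lborel_measure[OF _ ip A] dens_lborel_measure[OF _ im A] by simp
    also have "\<dots> = (\<integral>x. indicator A x * max 0 (g x) - indicator A x * max 0 (- g x) \<partial>lborel)"
      using integrable_mult_indicator[OF _ ip, of A] integrable_mult_indicator[OF _ im, of A] A
      by (subst Bochner_Integration.integral_diff) auto
    also have "\<dots> = (\<integral>x\<in>A. g x \<partial>lborel)"
      unfolding set_lebesgue_integral_def by (intro Bochner_Integration.integral_cong) (auto split: split_indicator)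
    finally show ?thesis .
  qed
  show "sm_int (pn g) f = (\<integral>x. g x * f x \<partial>lborel)" if fm[measurable]: "f \<in> borel_measurable borel" and i: "integrable lborel (\<lambda>x. g x * f x)" for f
  proof -
    have ia: "integrable lborel (\<lambda>x. \<bar>g x * f x\<bar>)" using i by (rule integrable_abs)
    have i1: "integrable lborel (\<lambda>x. max 0 (g x) * f x)"
      by (rule bound_by_integrable'[OF ia]) (auto simp: abs_mult intro!: mult_right_mono)
    have i2: "integrable lborel (\<lambda>x. max 0 (- g x) * f x)"
      by (rule bound_by_integrable'[OF ia]) (auto simp: abs_mult intro!: mult_right_mono)
    have "sm_int (pn g) f = (\<integral>x. max 0 (g x) * f x \<partial>lborel) - (\<integral>x. max 0 (- g x) * f x \<partial>lborel)"
      unfolding sm_int_def pn_def fst_conv snd_conv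
      by (subst (1 2) integral_density) auto
    also have "\<dots> = (\<integral>x. max 0 (g x) * f x - max 0 (- g x) * f x \<partial>lborel)"
      using i1 i2 by simp
    also have "\<dots> = (\<integral>x. g x * f x \<partial>lborel)"
      by (intro Bochner_Integration.integral_cong) (auto simp: max_def algebra_simps)
    finally show ?thesis .
  qed
qed



context constr
begin

definition "Kc = (\<integral>y. (1 + \<bar>y\<bar>) powr q \<partial>\<mu>1) + (\<integral>y. (1 + \<bar>y\<bar>) powr q \<partial>et)"
definition "G0 x = callf \<mu>0 x - callf et x"
definition "G1 x = callf \<mu>1 x - callf et x"

lemma G_bound: "\<bar>G0 x\<bar> \<le> Kc * (1 + \<bar>x\<bar>) powr (1 - q)" "\<bar>G1 x\<bar> \<le> Kc * (1 + \<bar>x\<bar>) powr (1 - q)"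
  using G_decay[OF h0 cx h1 mu1_mom het et_mom, of x] G_decay[OF h1 cx_refl h1 mu1_mom het et_mom, of x] q4
  by (simp_all add: G0_def G1_def Kc_def)

lemma G_meas[measurable]: "G0 \<in> borel_measurable borel" "G1 \<in> borel_measurable borel"
  using callf_meas[OF h0] callf_meas[OF h1] callf_meas[OF het] unfolding G0_def[abs_def] G1_def[abs_def] by measurable

lemma G_int: "integrable lborel G0" "integrable lborel G1"
proof -
  have e: "- (q - 1) = 1 - q" by simp
  show "integrable lborel G0" using q4 G_bound(1)
    by (intro integrable_pow_bound[of "q - 1" G0 Kc]) (auto simp: e)
  show "integrable lborel G1" using q4 G_bound(2)
    by (intro integrable_pow_bound[of "q - 1" G1 Kc]) (auto simp: e)
qed

definition "gg s x = al' s * G0 x + ga' s * G1 x"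

lemma gg_meas[measurable]: "gg s \<in> borel_measurable borel" unfolding gg_def[abs_def] by measurable

lemma gg_int: "integrable lborel (gg s)" unfolding gg_def[abs_def] using G_int by auto

definition "om s = pn (gg s)"

lemma bdd_int:
  fixes f :: "real \<Rightarrow> real" and C :: real
  assumes "P2c \<nu>" "f \<in> borel_measurable borel" "\<And>x. \<bar>f x\<bar> \<le> C"
  shows "integrable \<nu> f"
proof -
  interpret prob_space \<nu> using P2c_prob[OF assms(1)] .
  show ?thesis by (rule bound_by_integrable'[of _ "\<lambda>_. C"]) (use assms in \<open>auto intro: P2c_measI\<close>)
qed

lemma weak_cont:
  fixes f :: "real \<Rightarrow> real"
  assumes "continuous_on UNIV f" "bounded (range f)"
  shows "continuous_on {0..1} (\<lambda>s. integral\<^sup>L (mu s) f)"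
proof -
  obtain C where C: "\<And>x. \<bar>f x\<bar> \<le> C" using assms(2) unfolding bounded_iff by auto
  have fm: "f \<in> borel_measurable borel" by (rule borel_measurable_continuous_onI[OF assms(1)])
  have "continuous_on {0..1} (\<lambda>s. al s * integral\<^sup>L \<mu>0 f + be s * integral\<^sup>L et f + ga s * integral\<^sup>L \<mu>1 f)"
    by (intro continuous_intros continuous_on_subset[OF cont_coefs(1)] continuous_on_subset[OF cont_coefs(2)]
        continuous_on_subset[OF cont_coefs(3)]) auto
  then show ?thesis
    by (rule continuous_on_cong[THEN iffD1, rotated 2])
       (auto intro!: mix_int(2)[symmetric] fm bdd_int[OF _ fm C] h0 h1 het)
qed

lemma smval_meas:
  assumes A: "A \<in> sets borel"
  shows "(\<lambda>s. sm_val (om s) A) \<in> borel_measurable (restrict_space borel {0..1})"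
proof -
  have i0: "set_integrable lborel A G0" "set_integrable lborel A G1"
    unfolding set_integrable_def using integrable_mult_indicator[OF _ G_int(1), of A] integrable_mult_indicator[OF _ G_int(2), of A] A
    by auto
  have e: "sm_val (om s) A = al' s * (\<integral>x\<in>A. G0 x \<partial>lborel) + ga' s * (\<integral>x\<in>A. G1 x \<partial>lborel)" for s
  proof -
    have "sm_val (om s) A = (\<integral>x\<in>A. gg s x \<partial>lborel)" unfolding om_def by (rule pn_facts(3)[OF gg_int A])
    also have "\<dots> = (\<integral>x\<in>A. al' s * G0 x \<partial>lborel) + (\<integral>x\<in>A. ga' s * G1 x \<partial>lborel)"
      unfolding gg_def using i0 by (intro set_integral_add(2)) (auto intro: set_integrable_mult_right)
    also have "\<dots> = al' s * (\<integral>x\<in>A. G0 x \<partial>lborel) + ga' s * (\<integral>x\<in>A. G1 x \<partial>lborel)"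
      by (simp add: set_integral_mult_right)
    finally show ?thesis .
  qed
  have "(\<lambda>s. al' s * (\<integral>x\<in>A. G0 x \<partial>lborel) + ga' s * (\<integral>x\<in>A. G1 x \<partial>lborel)) \<in> borel_measurable borel"
    using borel_measurable_continuous_onI[OF cont_coefs(4)] borel_measurable_continuous_onI[OF cont_coefs(6)] by measurable
  then show ?thesis unfolding e by (rule measurable_restrict_space1)
qed

end


lemma lin3: "(x::real) * (a - e) + z * (c - e) = x * a + (- x - z) * e + z * c"
  by (simp add: algebra_simps)

context constr
begin

lemma pde:
  assumes tf: "test_fun \<phi>"
  shows "set_integrable lborel {0..1} (\<lambda>s. \<integral>x. pd True \<phi> s x \<partial>mu s)"
    and "set_integrable lborel {0..1} (\<lambda>s. sm_int (om s) (\<lambda>x. pd False (pd False \<phi>) s x))"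
    and "(\<integral>s\<in>{0..1}. (\<integral>x. pd True \<phi> s x \<partial>mu s) \<partial>lborel) +
         (\<integral>s\<in>{0..1}. sm_int (om s) (\<lambda>x. pd False (pd False \<phi>) s x) \<partial>lborel) = 0"
proof -
  interpret T: testf \<phi> by unfold_locales (fact tf)
  have D1e: "pd True \<phi> = T.D1" by (simp add: T.D1_def)
  have D2e: "pd False (pd False \<phi>) = T.D2" by (simp add: T.D2_def)
  have mD1[measurable]: "T.D1 s \<in> borel_measurable borel" for s
    by (rule borel_measurable_continuous_onI[OF cont_slice[OF T.cont_D1]])
  have mphi[measurable]: "\<phi> s \<in> borel_measurable borel" for s
    by (rule borel_measurable_continuous_onI[OF cont_slice[OF T.cont_phi]])
  have iD1: "integrable \<nu> (T.D1 s)" if "s \<in> {0..1}" "P2c \<nu>" for s \<nu>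
    by (rule bdd_int[OF that(2) mD1 T.B_bound(2)[OF that(1)]])
  have e1: "(\<integral>x. T.D1 s x \<partial>mu s) = al s * (\<integral>x. T.D1 s x \<partial>\<mu>0) + be s * (\<integral>x. T.D1 s x \<partial>et) + ga s * (\<integral>x. T.D1 s x \<partial>\<mu>1)"
    if s: "s \<in> {0..1}" for s
    using mix_int(2)[OF s mD1 iD1[OF s h0] iD1[OF s het] iD1[OF s h1]] .
  have e2: "sm_int (om s) (T.D2 s) = al' s * (\<integral>x. \<phi> s x \<partial>\<mu>0) + be' s * (\<integral>x. \<phi> s x \<partial>et) + ga' s * (\<integral>x. \<phi> s x \<partial>\<mu>1)"
    if s: "s \<in> {0..1}" for s
  proof -
    have c0: "integrable lborel (\<lambda>x. T.D2 s x * callf \<mu>0 x)" by (rule T.D2_call_integrable[OF h0 s])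
    have c1: "integrable lborel (\<lambda>x. T.D2 s x * callf \<mu>1 x)" by (rule T.D2_call_integrable[OF h1 s])
    have ce: "integrable lborel (\<lambda>x. T.D2 s x * callf et x)" by (rule T.D2_call_integrable[OF het s])
    have ee: "gg s x * T.D2 s x = al' s * (T.D2 s x * callf \<mu>0 x - T.D2 s x * callf et x) + ga' s * (T.D2 s x * callf \<mu>1 x - T.D2 s x * callf et x)" for x
      by (simp add: gg_def G0_def G1_def algebra_simps)
    have ig: "integrable lborel (\<lambda>x. gg s x * T.D2 s x)" unfolding ee using c0 c1 ce by auto
    have "sm_int (om s) (T.D2 s) = (\<integral>x. gg s x * T.D2 s x \<partial>lborel)"
      unfolding om_def by (rule pn_facts(4)[OF gg_int _ ig]) (rule borel_measurable_continuous_onI[OF cont_slice[OF T.cont_D2]])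
    also have "\<dots> = al' s * ((\<integral>x. T.D2 s x * callf \<mu>0 x \<partial>lborel) - (\<integral>x. T.D2 s x * callf et x \<partial>lborel)) + ga' s * ((\<integral>x. T.D2 s x * callf \<mu>1 x \<partial>lborel) - (\<integral>x. T.D2 s x * callf et x \<partial>lborel))"
      unfolding ee using c0 c1 ce by simp
    also have "\<dots> = al' s * ((\<integral>x. \<phi> s x \<partial>\<mu>0) - (\<integral>x. \<phi> s x \<partial>et)) + ga' s * ((\<integral>x. \<phi> s x \<partial>\<mu>1) - (\<integral>x. \<phi> s x \<partial>et))"
      using T.second_deriv_identity[OF h0 s] T.second_deriv_identity[OF h1 s] T.second_deriv_identity[OF het s] by simp
    also have "\<dots> = al' s * (\<integral>x. \<phi> s x \<partial>\<mu>0) + be' s * (\<integral>x. \<phi> s x \<partial>et) + ga' s * (\<integral>x. \<phi> s x \<partial>\<mu>1)"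
    proof -
      have h: "be' s = - al' s - ga' s" using coef'_sum[of s] by linarith
      show ?thesis unfolding h by (rule lin3)
    qed
    finally show ?thesis .
  qed
  note TA = T.time_identity[OF h0 al_deriv cont_coefs(4)]
  note TB = T.time_identity[OF het be_deriv cont_coefs(5)]
  note TC = T.time_identity[OF h1 ga_deriv cont_coefs(6)]
  define S1 where "S1 = (\<lambda>s. al s * (\<integral>x. T.D1 s x \<partial>\<mu>0) + be s * (\<integral>x. T.D1 s x \<partial>et) + ga s * (\<integral>x. T.D1 s x \<partial>\<mu>1))"
  define S2 where "S2 = (\<lambda>s. al' s * (\<integral>x. \<phi> s x \<partial>\<mu>0) + be' s * (\<integral>x. \<phi> s x \<partial>et) + ga' s * (\<integral>x. \<phi> s x \<partial>\<mu>1))"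
  have si1: "set_integrable lborel {0..1} S1" unfolding S1_def using TA(1) TB(1) TC(1) by (intro set_integral_add(1)) auto
  have si2: "set_integrable lborel {0..1} S2" unfolding S2_def using TA(2) TB(2) TC(2) by (intro set_integral_add(1)) auto
  have int1: "(\<integral>s\<in>{0..1}. S1 s \<partial>lborel) = (\<integral>s\<in>{0..1}. al s * (\<integral>x. T.D1 s x \<partial>\<mu>0) \<partial>lborel) + (\<integral>s\<in>{0..1}. be s * (\<integral>x. T.D1 s x \<partial>et) \<partial>lborel) + (\<integral>s\<in>{0..1}. ga s * (\<integral>x. T.D1 s x \<partial>\<mu>1) \<partial>lborel)"
    unfolding S1_def using TA(1) TB(1) TC(1) by (simp add: set_integral_add)
  have int2: "(\<integral>s\<in>{0..1}. S2 s \<partial>lborel) = (\<integral>s\<in>{0..1}. al' s * (\<integral>x. \<phi> s x \<partial>\<mu>0) \<partial>lborel) + (\<integral>s\<in>{0..1}. be' s * (\<integral>x. \<phi> s x \<partial>et) \<partial>lborel) + (\<integral>s\<in>{0..1}. ga' s * (\<integral>x. \<phi> s x \<partial>\<mu>1) \<partial>lborel)"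
    unfolding S2_def using TA(2) TB(2) TC(2) by (simp add: set_integral_add)
  have eq1: "s \<in> {0..1} \<Longrightarrow> (\<integral>x. pd True \<phi> s x \<partial>mu s) = S1 s" for s unfolding D1e S1_def using e1 by simp
  have eq2: "s \<in> {0..1} \<Longrightarrow> sm_int (om s) (\<lambda>x. pd False (pd False \<phi>) s x) = S2 s" for s unfolding D2e S2_def using e2 by simp
  show "set_integrable lborel {0..1} (\<lambda>s. \<integral>x. pd True \<phi> s x \<partial>mu s)"
  proof -
    have "set_integrable lborel {0..1} (\<lambda>s. \<integral>x. pd True \<phi> s x \<partial>mu s) = set_integrable lborel {0..1} S1"
      by (rule set_integrable_cong[OF refl refl eq1])
    then show ?thesis using si1 by simp
  qed
  show "set_integrable lborel {0..1} (\<lambda>s. sm_int (om s) (\<lambda>x. pd False (pd False \<phi>) s x))"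
  proof -
    have "set_integrable lborel {0..1} (\<lambda>s. sm_int (om s) (\<lambda>x. pd False (pd False \<phi>) s x)) = set_integrable lborel {0..1} S2"
      by (rule set_integrable_cong[OF refl refl eq2])
    then show ?thesis using si2 by simp
  qed
  have "(\<integral>s\<in>{0..1}. (\<integral>x. pd True \<phi> s x \<partial>mu s) \<partial>lborel) = (\<integral>s\<in>{0..1}. S1 s \<partial>lborel)"
    by (rule set_lebesgue_integral_cong) (simp, use eq1 in blast)
  moreover have "(\<integral>s\<in>{0..1}. sm_int (om s) (\<lambda>x. pd False (pd False \<phi>) s x) \<partial>lborel) = (\<integral>s\<in>{0..1}. S2 s \<partial>lborel)"
    by (rule set_lebesgue_integral_cong) (simp, use eq2 in blast)
  ultimately show "(\<integral>s\<in>{0..1}. (\<integral>x. pd True \<phi> s x \<partial>mu s) \<partial>lborel) +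
         (\<integral>s\<in>{0..1}. sm_int (om s) (\<lambda>x. pd False (pd False \<phi>) s x) \<partial>lborel) = 0"
    using int1 int2 TA(3) TB(3) TC(3) by linarith
qed

end


context constr
begin

definition "ed x = eta_d pp x"

lemma ed_pos: "ed x > 0" using eta_d_pos pp by (simp add: ed_def)
lemma ed_meas[measurable]: "ed \<in> borel_measurable borel" unfolding ed_def[abs_def] by measurable
lemma et_dens: "et = density lborel (\<lambda>x. ennreal (ed x))" by (simp add: et_def eta_def ed_def[abs_def])

lemma fe_meas_M[measurable]: "fe \<in> borel_measurable M" using M_measI[OF de(1)] .

lemma transfer_int:
  assumes km: "k \<in> borel_measurable borel"
  shows "integrable M (\<lambda>x. fe x * k x) \<longleftrightarrow> integrable lborel (\<lambda>x. ed x * k x)"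
    and "(\<integral>x. fe x * k x \<partial>M) = (\<integral>x. ed x * k x \<partial>lborel)"
proof -
  have kM: "k \<in> borel_measurable M" using km by (rule M_measI)
  have a1: "integrable et k \<longleftrightarrow> integrable M (\<lambda>x. fe x * k x)"
    using dens_int(1)[OF fe_meas_M de(2) kM] de(3) by simp
  have a2: "integral\<^sup>L et k = (\<integral>x. fe x * k x \<partial>M)"
    using dens_int(2)[OF fe_meas_M de(2) kM] de(3) by simp
  have b1: "integrable et k \<longleftrightarrow> integrable lborel (\<lambda>x. ed x * k x)"
    unfolding et_dens using dens_int(1)[of ed lborel k] ed_pos km by (simp add: less_imp_le)
  have b2: "integral\<^sup>L et k = (\<integral>x. ed x * k x \<partial>lborel)"
    unfolding et_dens using dens_int(2)[of ed lborel k] ed_pos km by (simp add: less_imp_le)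
  show "integrable M (\<lambda>x. fe x * k x) \<longleftrightarrow> integrable lborel (\<lambda>x. ed x * k x)" using a1 b1 by simp
  show "(\<integral>x. fe x * k x \<partial>M) = (\<integral>x. ed x * k x \<partial>lborel)" using a2 b2 by simp
qed

lemma transfer_nn:
  assumes km: "k \<in> borel_measurable borel"
  shows "(\<integral>\<^sup>+x. ennreal (fe x) * k x \<partial>M) = (\<integral>\<^sup>+x. ennreal (ed x) * k x \<partial>lborel)"
proof -
  have kM: "k \<in> borel_measurable M" using km by (rule M_measI)
  have "(\<integral>\<^sup>+x. ennreal (fe x) * k x \<partial>M) = integral\<^sup>N et k"
    using nn_integral_density[of "\<lambda>x. ennreal (fe x)" M k] kM de(3) by simp
  also have "\<dots> = (\<integral>\<^sup>+x. ennreal (ed x) * k x \<partial>lborel)"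
    unfolding et_dens using km by (subst nn_integral_density) auto
  finally show ?thesis .
qed

definition "ww s x = (if DD s x = 0 then 0 else fe x * (gg s x / ed x) / DD s x)"

lemma ww_meas[measurable]: "ww s \<in> borel_measurable borel"
  unfolding ww_def[abs_def] by measurable

lemma DD_ge: "s \<in> {0..1} \<Longrightarrow> be s * fe x \<le> DD s x"
  unfolding DD_def using coef_nonneg d0(2)[of x] d1(2)[of x] by (simp add: add_nonneg_nonneg)

lemma ww_P1: assumes s: "s \<in> {0<..<1}" shows "DD s x * ww s x = fe x * (gg s x / ed x)"
proof (cases "DD s x = 0")
  case True
  have "be s * fe x \<le> 0" using DD_ge[of s x] s True by simp
  then have "fe x = 0" using be_pos[OF s] de(2)[of x] by (simp add: mult_le_0_iff)
  then show ?thesis using True by (simp add: ww_def)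
qed (simp add: ww_def)

lemma ww_P2: assumes s: "s \<in> {0<..<1}" shows "DD s x * (ww s x)\<^sup>2 \<le> fe x * (gg s x / ed x)\<^sup>2 / be s"
proof (cases "DD s x = 0")
  case True
  then show ?thesis using de(2)[of x] be_pos[OF s] by (simp add: ww_def)
next
  case False
  define g where "g = gg s x / ed x"
  have D: "DD s x > 0" using DD_nonneg[of s x] s False by simp
  have b: "be s > 0" using be_pos[OF s] .
  have le: "be s * fe x \<le> DD s x" using DD_ge[of s x] s by simp
  have "DD s x * (ww s x)\<^sup>2 = (fe x * g)\<^sup>2 / DD s x" using False by (simp add: ww_def g_def power2_eq_square field_simps)
  also have "\<dots> \<le> fe x * g\<^sup>2 / be s"
  proof -
    have "(fe x * g)\<^sup>2 * be s = (fe x * g\<^sup>2) * (be s * fe x)" by (simp add: power2_eq_square algebra_simps)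
    also have "\<dots> \<le> (fe x * g\<^sup>2) * DD s x" using le de(2)[of x] by (intro mult_left_mono) auto
    finally show ?thesis using D b by (simp add: field_simps)
  qed
  finally show ?thesis by (simp add: g_def)
qed

end


context constr
begin

definition "QQ x = ((G0 x)\<^sup>2 + (G1 x)\<^sup>2) / ed x"

lemma QQ_meas[measurable]: "QQ \<in> borel_measurable borel" unfolding QQ_def[abs_def] by measurable

lemma QQ_int: "integrable lborel QQ"
proof (rule integrable_pow_bound[of "q / 2 - 1" QQ "2 * Kc\<^sup>2 * Zc pp"])
  show "q / 2 - 1 > 1" using q4 by simp
  show "QQ \<in> borel_measurable borel" by measurable
  fix x
  define r where "r = (1 + \<bar>x\<bar>) powr (1 - q)"
  have r0: "r \<ge> 0" by (simp add: r_def)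
  have sq: "(G0 x)\<^sup>2 \<le> (Kc * r)\<^sup>2" "(G1 x)\<^sup>2 \<le> (Kc * r)\<^sup>2"
    using power_mono[OF G_bound(1)[of x, folded r_def] abs_ge_zero, of 2] power_mono[OF G_bound(2)[of x, folded r_def] abs_ge_zero, of 2]
    by simp_all
  have Z: "Zc pp > 0" using Zc_pos pp by simp
  have inv: "1 / ed x = Zc pp * (1 + \<bar>x\<bar>) powr pp"
    using Z by (simp add: ed_def eta_d_def hpow_def powr_minus field_simps)
  have "\<bar>QQ x\<bar> = QQ x" using ed_pos[of x] by (simp add: QQ_def)
  also have "QQ x = ((G0 x)\<^sup>2 + (G1 x)\<^sup>2) * (1 / ed x)" by (simp add: QQ_def)
  also have "\<dots> \<le> (2 * (Kc * r)\<^sup>2) * (1 / ed x)"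
    using sq ed_pos[of x] by (intro mult_right_mono) auto
  also have "\<dots> = 2 * Kc\<^sup>2 * Zc pp * (r * r * (1 + \<bar>x\<bar>) powr pp)"
    unfolding inv by (simp add: power2_eq_square)
  also have "r * r * (1 + \<bar>x\<bar>) powr pp = (1 + \<bar>x\<bar>) powr (- (q / 2 - 1))"
  proof -
    have "r * r * (1 + \<bar>x\<bar>) powr pp = (1 + \<bar>x\<bar>) powr ((1 - q) + (1 - q) + pp)"
      by (simp only: r_def powr_add)
    also have "(1 - q) + (1 - q) + pp = - (q / 2 - 1)" by (simp add: pp_def field_simps)
    finally show ?thesis .
  qed
  finally show "\<bar>QQ x\<bar> \<le> 2 * Kc\<^sup>2 * Zc pp * (1 + \<bar>x\<bar>) powr (- (q / 2 - 1))" .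
qed

definition "Qc = (\<integral>x. QQ x \<partial>lborel)"

lemma action_bound:
  assumes s: "s \<in> {0<..<1}"
  shows "action (mu s) (om s) \<le> ennreal (48 * Qc)"
proof -
  have s01: "s \<in> {0..1}" using s by auto
  have b: "be s > 0" using be_pos[OF s] .
  have DDm: "DD s \<in> borel_measurable M" by (rule M_measI) measurable
  have wwM: "ww s \<in> borel_measurable M" by (rule M_measI) measurable
  have ggm: "(\<lambda>x. gg s x / ed x) \<in> borel_measurable borel" by measurable
  have i_ed: "integrable lborel (\<lambda>x. ed x * (gg s x / ed x))"
    using gg_int[of s] ed_pos by (simp add: less_imp_neq[symmetric])
  have iM: "integrable M (\<lambda>x. fe x * (gg s x / ed x))" using transfer_int(1)[OF ggm] i_ed by simp
  have wint: "integrable (mu s) (ww s)"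
  proof -
    have "integrable M (\<lambda>x. DD s x * ww s x)" using iM ww_P1[OF s] by simp
    then show ?thesis unfolding mu_def using dens_int(1)[OF DDm DD_nonneg[OF s01] wwM] by simp
  qed
  have wval: "\<forall>A\<in>sets borel. sm_val (om s) A = (\<integral>x\<in>A. ww s x \<partial>mu s)"
  proof
    fix A :: "real set" assume A: "A \<in> sets borel"
    have km: "(\<lambda>x. indicator A x * (gg s x / ed x)) \<in> borel_measurable borel" using A by measurable
    have ia: "integrable lborel (\<lambda>x. ed x * (indicator A x * (gg s x / ed x)))"
    proof -
      have "integrable lborel (\<lambda>x. indicator A x *\<^sub>R gg s x)" using integrable_mult_indicator[OF _ gg_int, of A] A by simp
      moreover have "(\<lambda>x. ed x * (indicator A x * (gg s x / ed x))) = (\<lambda>x. indicator A x *\<^sub>R gg s x)"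
        using ed_pos by (auto simp: less_imp_neq[symmetric])
      ultimately show ?thesis by simp
    qed
    have "sm_val (om s) A = (\<integral>x\<in>A. gg s x \<partial>lborel)" unfolding om_def by (rule pn_facts(3)[OF gg_int A])
    also have "\<dots> = (\<integral>x. ed x * (indicator A x * (gg s x / ed x)) \<partial>lborel)"
      unfolding set_lebesgue_integral_def
      by (intro Bochner_Integration.integral_cong) (use ed_pos in \<open>auto simp: less_imp_neq[symmetric]\<close>)
    also have "\<dots> = (\<integral>x. fe x * (indicator A x * (gg s x / ed x)) \<partial>M)" using transfer_int(2)[OF km] by simp
    also have "\<dots> = (\<integral>x. DD s x * (indicator A x * ww s x) \<partial>M)"
    proof (intro Bochner_Integration.integral_cong refl)
      fix x show "fe x * (indicator A x * (gg s x / ed x)) = DD s x * (indicator A x * ww s x)"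
        using ww_P1[OF s, of x] by (auto simp: indicator_def)
    qed
    also have "\<dots> = (\<integral>x. indicator A x * ww s x \<partial>mu s)"
    proof -
      have "(\<lambda>x. indicator A x * ww s x) \<in> borel_measurable borel"
        using borel_measurable_indicator[OF A] ww_meas[of s] by (rule borel_measurable_times)
      then show ?thesis unfolding mu_def by (intro dens_int(2)[symmetric] DDm DD_nonneg[OF s01] M_measI)
    qed
    also have "\<dots> = (\<integral>x\<in>A. ww s x \<partial>mu s)" by (simp add: set_lebesgue_integral_def)
    finally show "sm_val (om s) A = (\<integral>x\<in>A. ww s x \<partial>mu s)" .
  qed
  have "action (mu s) (om s) \<le> (\<integral>\<^sup>+x. ennreal ((ww s x)\<^sup>2) \<partial>mu s)"
    unfolding action_def by (rule INF_lower) (use wint wval in auto)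
  also have "\<dots> = (\<integral>\<^sup>+x. ennreal (DD s x) * ennreal ((ww s x)\<^sup>2) \<partial>M)"
    unfolding mu_def by (subst nn_integral_density) (use DDm wwM in auto)
  also have "\<dots> = (\<integral>\<^sup>+x. ennreal (DD s x * (ww s x)\<^sup>2) \<partial>M)"
    using DD_nonneg[OF s01] by (simp add: ennreal_mult)
  also have "\<dots> \<le> (\<integral>\<^sup>+x. ennreal (fe x) * ennreal ((gg s x / ed x)\<^sup>2 / be s) \<partial>M)"
  proof (rule nn_integral_mono)
    fix x
    have "DD s x * (ww s x)\<^sup>2 \<le> fe x * ((gg s x / ed x)\<^sup>2 / be s)" using ww_P2[OF s, of x] by simp
    then have "ennreal (DD s x * (ww s x)\<^sup>2) \<le> ennreal (fe x * ((gg s x / ed x)\<^sup>2 / be s))" by (rule ennreal_leI)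
    also have "\<dots> = ennreal (fe x) * ennreal ((gg s x / ed x)\<^sup>2 / be s)"
      by (rule ennreal_mult[OF de(2)]) (use b in simp)
    finally show "ennreal (DD s x * (ww s x)\<^sup>2) \<le> ennreal (fe x) * ennreal ((gg s x / ed x)\<^sup>2 / be s)" .
  qed
  also have "\<dots> = (\<integral>\<^sup>+x. ennreal (ed x) * ennreal ((gg s x / ed x)\<^sup>2 / be s) \<partial>lborel)"
    by (rule transfer_nn) measurable
  also have "\<dots> \<le> (\<integral>\<^sup>+x. ennreal (48 * QQ x) \<partial>lborel)"
  proof (rule nn_integral_mono)
    fix x
    have e: "ed x > 0" using ed_pos .
    have eq: "ed x * ((gg s x / ed x)\<^sup>2 / be s) = (gg s x)\<^sup>2 / be s / ed x"
      using e by (simp add: power2_eq_square field_simps)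
    have sq: "(gg s x)\<^sup>2 \<le> 2 * (al' s)\<^sup>2 * (G0 x)\<^sup>2 + 2 * (ga' s)\<^sup>2 * (G1 x)\<^sup>2"
    proof -
      have "0 \<le> (al' s * G0 x - ga' s * G1 x)\<^sup>2" by simp
      then show ?thesis unfolding gg_def by (simp add: power2_eq_square algebra_simps)
    qed
    have "(gg s x)\<^sup>2 / be s \<le> (2 * (al' s)\<^sup>2 * (G0 x)\<^sup>2 + 2 * (ga' s)\<^sup>2 * (G1 x)\<^sup>2) / be s"
      using b sq by (intro divide_right_mono) auto
    also have "\<dots> = 2 * ((al' s)\<^sup>2 / be s) * (G0 x)\<^sup>2 + 2 * ((ga' s)\<^sup>2 / be s) * (G1 x)\<^sup>2"
      using b by (simp add: field_simps)
    also have "\<dots> \<le> 2 * 24 * (G0 x)\<^sup>2 + 2 * 24 * (G1 x)\<^sup>2"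
    proof -
      have "(al' s)\<^sup>2 / be s \<le> 24" using ratio_bounds(1)[OF s] b by (simp add: divide_le_eq)
      moreover have "(ga' s)\<^sup>2 / be s \<le> 24" using ratio_bounds(2)[OF s] b by (simp add: divide_le_eq)
      ultimately show ?thesis by (intro add_mono mult_right_mono mult_left_mono) auto
    qed
    finally have le1: "(gg s x)\<^sup>2 / be s \<le> 2 * 24 * (G0 x)\<^sup>2 + 2 * 24 * (G1 x)\<^sup>2" .
    have "(gg s x)\<^sup>2 / be s / ed x \<le> (2 * 24 * (G0 x)\<^sup>2 + 2 * 24 * (G1 x)\<^sup>2) / ed x"
      using e le1 by (intro divide_right_mono) auto
    also have "\<dots> = 48 * QQ x" by (simp add: QQ_def field_simps)
    finally have "ed x * ((gg s x / ed x)\<^sup>2 / be s) \<le> 48 * QQ x" using eq by simp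
    then show "ennreal (ed x) * ennreal ((gg s x / ed x)\<^sup>2 / be s) \<le> ennreal (48 * QQ x)"
      using e b by (simp add: ennreal_mult[symmetric] ennreal_leI)
  qed
  also have "\<dots> = ennreal (\<integral>x. 48 * QQ x \<partial>lborel)"
  proof (rule nn_integral_eq_integral)
    show "integrable lborel (\<lambda>x. 48 * QQ x)" using QQ_int by simp
    have "QQ x \<ge> 0" for x using ed_pos[of x] by (simp add: QQ_def)
    then show "AE x in lborel. 0 \<le> 48 * QQ x" by simp
  qed
  also have "\<dots> = ennreal (48 * Qc)" by (simp add: Qc_def)
  finally show ?thesis .
qed

end


context constr
begin

lemma adm: "admissible \<mu>0 \<mu>1 mu om"
proof -
  have c1: "\<forall>s\<in>{0..1}. P2c (mu s)" using P2c_mu by blast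
  have c3: "\<forall>f::real\<Rightarrow>real. continuous_on UNIV f \<longrightarrow> bounded (range f) \<longrightarrow> continuous_on {0..1} (\<lambda>s. integral\<^sup>L (mu s) f)"
    by (intro allI impI weak_cont)
  have c4: "\<forall>s\<in>{0..1}. fin_borel (fst (om s)) \<and> fin_borel (snd (om s))"
    unfolding om_def using pn_facts(1,2)[OF gg_int] by blast
  have c5: "\<forall>A\<in>sets borel. (\<lambda>s. sm_val (om s) A) \<in> borel_measurable (restrict_space borel {0..1})"
    using smval_meas by blast
  have c6: "\<forall>\<phi>. test_fun \<phi> \<longrightarrow>
         set_integrable lborel {0..1} (\<lambda>s. integral\<^sup>L (mu s) (\<lambda>x. pd True \<phi> s x)) \<and>
         set_integrable lborel {0..1} (\<lambda>s. sm_int (om s) (\<lambda>x. pd False (pd False \<phi>) s x)) \<and>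
         (\<integral>s\<in>{0..1}. integral\<^sup>L (mu s) (\<lambda>x. pd True \<phi> s x) \<partial>lborel) +
         (\<integral>s\<in>{0..1}. sm_int (om s) (\<lambda>x. pd False (pd False \<phi>) s x) \<partial>lborel) = 0"
    using pde by blast
  show ?thesis unfolding admissible_def using c1 mu_0 mu_1 c3 c4 c5 c6 by (intro conjI)
qed

lemma sq_finite: "diffusive_sq \<mu>0 \<mu>1 < \<infinity>"
proof -
  have "diffusive_sq \<mu>0 \<mu>1 \<le> (\<integral>\<^sup>+ s\<in>{0..1}. action (mu s) (om s) \<partial>lborel)"
    unfolding diffusive_sq_def by (rule INF_lower2[of "(mu, om)"]) (use adm in auto)
  also have "\<dots> \<le> (\<integral>\<^sup>+ s. ennreal (48 * Qc) * indicator {0..1::real} s \<partial>lborel)"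
  proof (rule nn_integral_mono_AE)
    have "AE s in lborel. s \<noteq> (0::real)" by (rule AE_lborel_singleton)
    moreover have "AE s in lborel. s \<noteq> (1::real)" by (rule AE_lborel_singleton)
    ultimately show "AE s in lborel. action (mu s) (om s) * indicator {0..1} s \<le> ennreal (48 * Qc) * indicator {0..1} s"
    proof eventually_elim
      case (elim s)
      show ?case
      proof (cases "s \<in> {0..1}")
        case True
        then have "s \<in> {0<..<1}" using elim by auto
        then show ?thesis using action_bound by (simp add: True)
      qed simp
    qed
  qed
  also have "\<dots> = ennreal (48 * Qc) * emeasure lborel {0..1::real}"
    by (rule nn_integral_cmult_indicator) simp
  also have "\<dots> < \<infinity>" by (simp add: ennreal_mult_less_top)
  finally show ?thesis .
qed

end

theorem mainTheorem3:
  fixes \<mu>0 \<mu>1 :: "real measure" and q :: real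
  assumes "P2c \<mu>0" and "P2c \<mu>1" and "cx_le \<mu>0 \<mu>1"
    and "q > 4" and "(\<integral>\<^sup>+ x. ennreal (\<bar>x\<bar> powr q) \<partial>\<mu>1) < \<infinity>"
  shows "diffusive_dist \<mu>0 \<mu>1 < \<infinity>"
proof -
  interpret constr \<mu>0 \<mu>1 q using assms by unfold_locales
  have "diffusive_sq \<mu>0 \<mu>1 \<noteq> \<infinity>" using sq_finite by simp
  then show ?thesis unfolding diffusive_dist_def by simp
qed



end
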